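(* Let $(X,d,A)$ be a metric pair and let $p\in[1,\infty]$. Then the following are equivalent: (i) for every $\alpha,\beta\in\overline{D}_p(X,A)$ with $W_p(\alpha,\beta)<\infty$ there exists an optimal matching $\sigma\in\overline{D}(X\times X,A\times A)$ of $\alpha$ and $\beta$; (ii) $A$ is distance minimizing, i.e. for each $x\in X$ with $d(x,A)<\infty$ there exists $a\in A$ with $d(x,A)=d(x,a)$.
   Context: A metric on a set $X$ is a map $d:X\times X\to[0,\infty]$ with $d(x,x)=0$, $d(x,y)=d(y,x)$ and $d(x,z)\le d(x,y)+d(y,z)$; infinite distances are allowed and $d(x,y)=0$ need not imply $x=y$. A metric pair $(X,d,A)$ is a metric space $(X,d)$ together with a closed subset $A\subset X$. Write $d(x,A)=\inf_{a\in A}d(x,a)$ and, for $\delta\in(0,\infty]$, $A^\delta=\{x\in X: d(x,A)<\delta\}$. A (countable) persistence diagram $\alpha\in\overline{D}(X,A)$ is a function $\hat\alpha:X\setminus A\to\mathbb{Z}_{\ge0}$ with countable support, written as a formal sum $\hat\alpha=\sum_{i\in I}x_i$ ($I$ countable, $x_i\in X\setminus A$, repetitions allowed); equivalently, a countable formal sum of points of $X$ modulo formal sums of points of $A$. $0$ denotes the empty diagram, $|\alpha|=|I|$. Similarly $\overline{D}(X\times X,A\times A)$ consists of countable formal sums of points of $(X\times X)\setminus(A\times A)$. Given $\hat\alpha=\sum_{i\in I}x_i$ and $\hat\beta=\sum_{j\in J}y_j$, a matching of $\alpha$ and $\beta$ is an element $\sigma$ of the form $\hat\sigma=\sum_{k\in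 K}(x_k,y_{\varphi(k)})+\sum_{i\in I\setminus K}(x_i,z_i)+\sum_{j\in J\setminus\varphi(K)}(w_j,y_j)$ for some $K\subset I$, injection $\varphi:K\to J$, and points $z_i,w_j\in A$. Writing $\hat\sigma=\sum_{l\in L}(u_l,v_l)$, its $p$-cost is $\mathrm{Cost}_p(\sigma)=\|(d(u_l,v_l))_{l\in L}\|_p\in[0,\infty]$ (the $\ell^p$ norm, sup norm if $p=\infty$). The $p$-Wasserstein distance is $W_p(\alpha,\beta)=\inf_\sigma\mathrm{Cost}_p(\sigma)$ over all matchings; an optimal matching is one with $\mathrm{Cost}_p(\sigma)=W_p(\alpha,\beta)$. For $\alpha$ and $\delta\in(0,\infty]$, the $\delta$-upper part $u_\delta(\alpha)$ is the restriction of $\hat\alpha$ to $X\setminus A^\delta$ and the $\delta$-lower part $\ell_\delta(\alpha)$ is the restriction to $A^\delta\setminus A$. For $p\in[1,\infty)$, $\overline{D}_p(X,A)=\{\alpha\in\overline{D}(X,A): |u_\infty(\alpha)|<\infty,\ W_p(\ell_\infty(\alpha),0)<\infty\}$; and $\overline{D}_\infty(X,A)=\{\alpha: |u_\delta(\alpha)|<\infty\text{ for all }\delta>0\}$. *)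

theory Defs
  imports "HOL-Analysis.Analysis"
begin

(* Extended pseudo-metric on the whole type 'a (X = UNIV), values in [0,\<infinity>]. *)
definition emetric :: "('a \<Rightarrow> 'a \<Rightarrow> ennreal) \<Rightarrow> bool" where
  "emetric d \<longleftrightarrow> (\<forall>x. d x x = 0) \<and> (\<forall>x y. d x y = d y x) \<and>
     (\<forall>x y z. d x z \<le> d x y + d y z)"

definition eclosed :: "('a \<Rightarrow> 'a \<Rightarrow> ennreal) \<Rightarrow> 'a set \<Rightarrow> bool" where
  "eclosed d A \<longleftrightarrow> (\<forall>x. x \<notin> A \<longrightarrow> (\<exists>e::real>0. \<forall>y. d x y < ennreal e \<longrightarrow> y \<notin> A))"

(* d(x,A) = inf over a in A (= \<infinity> if A empty) *)
definition setdist :: "('a \<Rightarrow> 'a \<Rightarrow> ennreal) \<Rightarrow> 'a \<Rightarrow> 'a set \<Rightarrow> ennreal" where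
  "setdist d x A = (INF a\<in>A. d x a)"

definition thick :: "('a \<Rightarrow> 'a \<Rightarrow> ennreal) \<Rightarrow> 'a set \<Rightarrow> ennreal \<Rightarrow> 'a set" where
  "thick d A \<delta> = {x. setdist d x A < \<delta>}"

definition dist_minimizing :: "('a \<Rightarrow> 'a \<Rightarrow> ennreal) \<Rightarrow> 'a set \<Rightarrow> bool" where
  "dist_minimizing d A \<longleftrightarrow>
     (\<forall>x. setdist d x A < \<infinity> \<longrightarrow> (\<exists>a\<in>A. setdist d x A = d x a))"

(* Persistence diagrams in D(X,A): functions X\A \<rightarrow> Z_{\<ge>0} with countable support,
   represented as functions 'a \<Rightarrow> nat vanishing on A. *)
definition dgm :: "'b set \<Rightarrow> ('b \<Rightarrow> nat) set" where
  "dgm S = {f. countable {u. f u \<noteq> 0} \<and> (\<forall>u\<in>S. f u = 0)}"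

(* f is the formal sum \<Sum>_{i\<in>I} x_i with all x_i outside S (countable index set I \<subseteq> nat) *)
definition is_fsum :: "'b set \<Rightarrow> ('b \<Rightarrow> nat) \<Rightarrow> nat set \<Rightarrow> (nat \<Rightarrow> 'b) \<Rightarrow> bool" where
  "is_fsum S f I x \<longleftrightarrow> (\<forall>i\<in>I. x i \<notin> S) \<and>
     (\<forall>u. finite {i\<in>I. x i = u} \<and> f u = card {i\<in>I. x i = u})"

definition is_matching :: "'a set \<Rightarrow> ('a \<Rightarrow> nat) \<Rightarrow> ('a \<Rightarrow> nat) \<Rightarrow> ('a \<times> 'a \<Rightarrow> nat) \<Rightarrow> bool" where
  "is_matching A \<alpha> \<beta> \<sigma> \<longleftrightarrow>
    (\<exists>I x J y K \<phi> z w. is_fsum A \<alpha> I x \<and> is_fsum A \<beta> J y \<and>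
       K \<subseteq> I \<and> inj_on \<phi> K \<and> \<phi> ` K \<subseteq> J \<and>
       (\<forall>i\<in>I - K. z i \<in> A) \<and> (\<forall>j\<in>J - \<phi> ` K. w j \<in> A) \<and>
       \<sigma> = (\<lambda>q. card {k\<in>K. (x k, y (\<phi> k)) = q} + card {i\<in>I - K. (x i, z i) = q}
                 + card {j\<in>J - \<phi> ` K. (w j, y j) = q}))"

definition enn_powr :: "ennreal \<Rightarrow> real \<Rightarrow> ennreal" where
  "enn_powr x r = (if x = \<infinity> then \<infinity> else ennreal (enn2real x powr r))"

definition Cost :: "('a \<Rightarrow> 'a \<Rightarrow> ennreal) \<Rightarrow> ennreal \<Rightarrow> ('a \<times> 'a \<Rightarrow> nat) \<Rightarrow> ennreal" where
  "Cost d p \<sigma> = (if p = \<infinity> then (SUP q\<in>{q. \<sigma> q \<noteq> 0}. d (fst q) (snd q))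
     else enn_powr (\<integral>\<^sup>+ q. of_nat (\<sigma> q) * enn_powr (d (fst q) (snd q)) (enn2real p)
                      \<partial>count_space UNIV) (1 / enn2real p))"

definition Wp :: "('a \<Rightarrow> 'a \<Rightarrow> ennreal) \<Rightarrow> 'a set \<Rightarrow> ennreal \<Rightarrow> ('a \<Rightarrow> nat) \<Rightarrow> ('a \<Rightarrow> nat) \<Rightarrow> ennreal" where
  "Wp d A p \<alpha> \<beta> = (INF \<sigma>\<in>{\<sigma>. is_matching A \<alpha> \<beta> \<sigma>}. Cost d p \<sigma>)"

definition restr :: "'a set \<Rightarrow> ('a \<Rightarrow> nat) \<Rightarrow> ('a \<Rightarrow> nat)" where
  "restr S \<alpha> = (\<lambda>x. if x \<in> S then \<alpha> x else 0)"

definition dsize :: "('a \<Rightarrow> nat) \<Rightarrow> ennreal" where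
  "dsize \<alpha> = (\<integral>\<^sup>+ x. of_nat (\<alpha> x) \<partial>count_space UNIV)"

definition upper_part :: "('a \<Rightarrow> 'a \<Rightarrow> ennreal) \<Rightarrow> 'a set \<Rightarrow> ennreal \<Rightarrow> ('a \<Rightarrow> nat) \<Rightarrow> ('a \<Rightarrow> nat)" where
  "upper_part d A \<delta> \<alpha> = restr (- thick d A \<delta>) \<alpha>"

definition lower_part :: "('a \<Rightarrow> 'a \<Rightarrow> ennreal) \<Rightarrow> 'a set \<Rightarrow> ennreal \<Rightarrow> ('a \<Rightarrow> nat) \<Rightarrow> ('a \<Rightarrow> nat)" where
  "lower_part d A \<delta> \<alpha> = restr (thick d A \<delta> - A) \<alpha>"

definition Dp :: "('a \<Rightarrow> 'a \<Rightarrow> ennreal) \<Rightarrow> 'a set \<Rightarrow> ennreal \<Rightarrow> ('a \<Rightarrow> nat) set" where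
  "Dp d A p = (if p = \<infinity> then
       {\<alpha>\<in>dgm A. \<forall>\<delta>>0. dsize (upper_part d A \<delta> \<alpha>) < \<infinity>}
     else {\<alpha>\<in>dgm A. dsize (upper_part d A \<infinity> \<alpha>) < \<infinity> \<and>
                    Wp d A p (lower_part d A \<infinity> \<alpha>) (\<lambda>_. 0) < \<infinity>})"

end

theory Submission
  imports Defs
begin

lemma subseq_nat_bounded:
  fixes f :: "nat \<Rightarrow> nat \<Rightarrow> nat" and b :: "nat \<Rightarrow> nat"
  assumes "\<And>n i. f n i \<le> b i"
  shows "\<exists>r t. strict_mono r \<and> (\<forall>i. eventually (\<lambda>n. f (r n) i = t i) sequentially)"
proof -
  define S where "S = PiE (UNIV::nat set) (\<lambda>i. {0..real (b i)})"
  have "compactin (product_topology (\<lambda>i. euclidean) UNIV) S"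
    unfolding S_def by (subst compactin_PiE) auto
  hence "compact S" by (simp add: euclidean_product_topology)
  hence sc: "seq_compact S" by (rule compact_imp_seq_compact)
  define g where "g n = (\<lambda>i. real (f n i))" for n
  have "\<forall>n. g n \<in> S" using assms unfolding S_def g_def by auto
  then obtain l r where r: "strict_mono r" and lim: "((g \<circ> r) \<longlongrightarrow> l) sequentially"
    using sc unfolding seq_compact_def by blast
  have "\<exists>t. eventually (\<lambda>n. f (r n) i = t) sequentially" for i
  proof -
    have "((\<lambda>n. (g (r n)) i) \<longlongrightarrow> l i) sequentially"
      using continuous_on_tendsto_compose[OF continuous_on_product_coordinates[of i] lim]
      by (simp add: o_def)
    hence "eventually (\<lambda>n. dist ((g (r n)) i) (l i) < 1/2) sequentially"
      by (rule tendstoD) simp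
    then obtain N where N: "\<And>n. n \<ge> N \<Longrightarrow> dist ((g (r n)) i) (l i) < 1/2"
      by (auto simp: eventually_sequentially)
    have "f (r n) i = f (r N) i" if "n \<ge> N" for n
    proof -
      have h1: "\<bar>real (f (r n) i) - l i\<bar> < 1/2" and h2: "\<bar>real (f (r N) i) - l i\<bar> < 1/2"
        using N[OF that] N[of N] by (simp_all add: g_def dist_real_def)
      have "\<bar>real (f (r n) i) - real (f (r N) i)\<bar> < 1"
        using h1 h2 by linarith
      thus ?thesis by linarith
    qed
    thus ?thesis by (auto simp: eventually_sequentially)
  qed
  then obtain t where "\<forall>i. eventually (\<lambda>n. f (r n) i = t i) sequentially" by metis
  with r show ?thesis by blast
qed


lemma enn_powr_inv:
  assumes "r > 0" shows "enn_powr (enn_powr t r) (1/r) = t"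
proof (cases "t = \<infinity>")
  case True thus ?thesis by (simp add: enn_powr_def)
next
  case False
  then obtain a where a: "t = ennreal a" "a \<ge> 0" by (cases t) auto
  have "(a powr r) powr (1/r) = a" using assms a by (simp add: powr_powr powr_one)
  thus ?thesis using a by (simp add: enn_powr_def)
qed

lemma enn_powr_mono:
  assumes "s \<le> t" "r \<ge> 0" shows "enn_powr s r \<le> enn_powr t r"
proof (cases "t = \<infinity>")
  case True thus ?thesis by (simp add: enn_powr_def)
next
  case False
  hence "s \<noteq> \<infinity>" using assms(1) by (auto simp: top_unique)
  hence "enn2real s \<le> enn2real t" using assms(1) False by (simp add: enn2real_mono top.not_eq_extremum)
  hence "enn2real s powr r \<le> enn2real t powr r" using assms by (intro powr_mono2) auto
  thus ?thesis using False \<open>s \<noteq> \<infinity>\<close> by (simp add: enn_powr_def ennreal_leI)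
qed

lemma enn_powr_zero[simp]: "enn_powr 0 r = 0"
  by (simp add: enn_powr_def)

lemma enn_powr_pos:
  assumes "t > 0" "r > 0" shows "enn_powr t r > 0"
proof (cases "t = \<infinity>")
  case True thus ?thesis by (simp add: enn_powr_def)
next
  case False
  hence "enn2real t > 0" using assms by (simp add: enn2real_positive_iff top.not_eq_extremum)
  thus ?thesis using False by (simp add: enn_powr_def)
qed

lemma enn_powr_top[simp]: "enn_powr \<infinity> r = \<infinity>"
  by (simp add: enn_powr_def)

lemma enn_powr_le_iff:
  assumes "r > 0" shows "enn_powr s (1/r) \<le> c \<longleftrightarrow> s \<le> enn_powr c r"
proof
  assume "enn_powr s (1/r) \<le> c"
  hence "enn_powr (enn_powr s (1/r)) r \<le> enn_powr c r" using assms by (intro enn_powr_mono) auto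
  moreover have "enn_powr (enn_powr s (1/r)) r = s"
    using enn_powr_inv[of "1/r" s] assms by simp
  ultimately show "s \<le> enn_powr c r" by simp
next
  assume "s \<le> enn_powr c r"
  hence "enn_powr s (1/r) \<le> enn_powr (enn_powr c r) (1/r)" using assms by (intro enn_powr_mono) auto
  thus "enn_powr s (1/r) \<le> c" using enn_powr_inv[OF assms] by simp
qed

lemma finite_sum_le_nn:
  fixes f :: "'b \<Rightarrow> ennreal"
  assumes "finite E" shows "(\<Sum>x\<in>E. f x) \<le> (\<integral>\<^sup>+x. f x \<partial>count_space UNIV)"
proof -
  have "(\<Sum>x\<in>E. f x) = (\<integral>\<^sup>+x. f x \<partial>count_space E)" using assms by (simp add: nn_integral_count_space_finite)
  also have "\<dots> = (\<integral>\<^sup>+x. f x * indicator E x \<partial>count_space UNIV)" by (simp add: nn_integral_count_space_indicator)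
  also have "\<dots> \<le> (\<integral>\<^sup>+x. f x \<partial>count_space UNIV)" by (intro nn_integral_mono) (auto split: split_indicator)
  finally show ?thesis .
qed

lemma nn_le_from_finite_sums:
  fixes g :: "'b \<Rightarrow> ennreal"
  assumes cnt: "countable {x. g x \<noteq> 0}" and fin: "\<And>E. finite E \<Longrightarrow> (\<Sum>x\<in>E. g x) \<le> C"
  shows "(\<integral>\<^sup>+x. g x \<partial>count_space UNIV) \<le> C"
proof -
  define S where "S = {x. g x \<noteq> 0}"
  have eq: "(\<integral>\<^sup>+x. g x \<partial>count_space UNIV) = (\<integral>\<^sup>+x. g x \<partial>count_space S)"
    by (simp add: nn_integral_count_space_indicator S_def indicator_def of_bool_def if_distrib cong: if_cong)
       (intro nn_integral_cong, auto)
  show ?thesis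
  proof (cases "finite S")
    case True thus ?thesis using eq fin by (simp add: nn_integral_count_space_finite)
  next
    case False
    have cS: "countable S" using cnt S_def by simp
    note bij = bij_betw_from_nat_into[OF cS False]
    have "(\<integral>\<^sup>+x. g x \<partial>count_space S) = (\<integral>\<^sup>+n. g (from_nat_into S n) \<partial>count_space UNIV)"
      using nn_integral_bij_count_space[OF bij, of g] by simp
    also have "\<dots> = (\<Sum>n. g (from_nat_into S n))" by (rule nn_integral_count_space_nat)
    also have "\<dots> = (SUP n. \<Sum>i<n. g (from_nat_into S i))" by (rule suminf_eq_SUP)
    also have "\<dots> \<le> C"
    proof (rule SUP_least)
      fix n
      have inj: "inj_on (from_nat_into S) {..<n}"
        using bij by (auto simp: bij_betw_def inj_on_def)
      have "(\<Sum>i<n. g (from_nat_into S i)) = (\<Sum>x\<in>from_nat_into S ` {..<n}. g x)"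
        by (simp add: sum.reindex[OF inj])
      also have "\<dots> \<le> C" by (rule fin) simp
      finally show "(\<Sum>i<n. g (from_nat_into S i)) \<le> C" .
    qed
    finally show ?thesis using eq by simp
  qed
qed


lemma card_fiber_sum:
  assumes "finite S" "finite T" "g ` S \<subseteq> T"
  shows "(\<Sum>y\<in>T. card {x\<in>S. g x = y}) = card S"
  using sum.group[OF assms, of "\<lambda>_. 1::nat"] by simp

definition mok :: "'a set \<Rightarrow> ('a \<Rightarrow> nat) \<Rightarrow> ('a \<Rightarrow> nat) \<Rightarrow> ('a \<times> 'a \<Rightarrow> nat) \<Rightarrow> bool" where
  "mok A \<alpha> \<beta> \<sigma> \<longleftrightarrow> (\<forall>u v. u \<in> A \<longrightarrow> v \<in> A \<longrightarrow> \<sigma> (u, v) = 0) \<and>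
     (\<forall>u. u \<notin> A \<longrightarrow> finite {v. \<sigma> (u, v) \<noteq> 0} \<and> (\<Sum>v\<in>{v. \<sigma> (u, v) \<noteq> 0}. \<sigma> (u, v)) = \<alpha> u) \<and>
     (\<forall>v. v \<notin> A \<longrightarrow> finite {u. \<sigma> (u, v) \<noteq> 0} \<and> (\<Sum>u\<in>{u. \<sigma> (u, v) \<noteq> 0}. \<sigma> (u, v)) = \<beta> v) \<and>
     countable {q. \<sigma> q \<noteq> 0}"

lemma sum_supp_eq:
  fixes f :: "'b \<Rightarrow> nat"
  assumes "finite R" "{v. f v \<noteq> 0} \<subseteq> R"
  shows "(\<Sum>v\<in>{v. f v \<noteq> 0}. f v) = (\<Sum>v\<in>R. f v)"
  using assms by (intro sum.mono_neutral_left) auto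

lemma matching_mok:
  assumes "is_matching A \<alpha> \<beta> \<sigma>"
  shows "mok A \<alpha> \<beta> \<sigma>"
proof -
  obtain I x J y K \<phi> z w where fa: "is_fsum A \<alpha> I x" and fb: "is_fsum A \<beta> J y" and
    KI: "K \<subseteq> I" and inj: "inj_on \<phi> K" and phiK: "\<phi> ` K \<subseteq> J" and
    zA: "\<forall>i\<in>I - K. z i \<in> A" and wA: "\<forall>j\<in>J - \<phi> ` K. w j \<in> A" and
    sig: "\<sigma> = (\<lambda>q. card {k\<in>K. (x k, y (\<phi> k)) = q} + card {i\<in>I - K. (x i, z i) = q}
                 + card {j\<in>J - \<phi> ` K. (w j, y j) = q})"
    using assms unfolding is_matching_def by blast
  have xA: "\<And>i. i \<in> I \<Longrightarrow> x i \<notin> A" and yA: "\<And>j. j \<in> J \<Longrightarrow> y j \<notin> A"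
    using fa fb by (auto simp: is_fsum_def)
  have finI: "\<And>u. finite {i\<in>I. x i = u}" and aI: "\<And>u. \<alpha> u = card {i\<in>I. x i = u}"
    using fa by (auto simp: is_fsum_def)
  have finJ: "\<And>v. finite {j\<in>J. y j = v}" and bJ: "\<And>v. \<beta> v = card {j\<in>J. y j = v}"
    using fb by (auto simp: is_fsum_def)
  have c1: "\<forall>u v. u \<in> A \<longrightarrow> v \<in> A \<longrightarrow> \<sigma> (u, v) = 0"
  proof (intro allI impI)
    fix u v assume "u \<in> A" "v \<in> A"
    have e1: "{k\<in>K. (x k, y (\<phi> k)) = (u, v)} = {}" using xA KI \<open>u \<in> A\<close> by auto
    have e2: "{i\<in>I - K. (x i, z i) = (u, v)} = {}" using xA \<open>u \<in> A\<close> by auto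
    have e3: "{j\<in>J - \<phi> ` K. (w j, y j) = (u, v)} = {}" using yA \<open>v \<in> A\<close> by auto
    show "\<sigma> (u, v) = 0" by (simp only: sig e1 e2 e3 card.empty add_0)
  qed
  have c2: "finite {v. \<sigma> (u, v) \<noteq> 0} \<and> (\<Sum>v\<in>{v. \<sigma> (u, v) \<noteq> 0}. \<sigma> (u, v)) = \<alpha> u" if "u \<notin> A" for u
  proof -
    define Iu where "Iu = {i\<in>I. x i = u}"
    have fIu: "finite Iu" using finI Iu_def by simp
    define R where "R = (\<lambda>k. y (\<phi> k)) ` (Iu \<inter> K) \<union> z ` (Iu - K)"
    have fR: "finite R" using fIu R_def by simp
    have e3: "{j\<in>J - \<phi> ` K. (w j, y j) = (u, v)} = {}" for v using wA that by auto
    have e1: "{k\<in>K. (x k, y (\<phi> k)) = (u, v)} = {k\<in>Iu \<inter> K. y (\<phi> k) = v}" for v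
      using KI by (auto simp: Iu_def)
    have e2: "{i\<in>I - K. (x i, z i) = (u, v)} = {i\<in>Iu - K. z i = v}" for v
      by (auto simp: Iu_def)
    have row: "\<sigma> (u, v) = card {k\<in>Iu \<inter> K. y (\<phi> k) = v} + card {i\<in>Iu - K. z i = v}" for v
      by (simp only: sig e1 e2 e3 card.empty add_0 add_0_right)
    have sub: "{v. \<sigma> (u, v) \<noteq> 0} \<subseteq> R"
    proof
      fix v assume "v \<in> {v. \<sigma> (u, v) \<noteq> 0}"
      have "{k\<in>Iu \<inter> K. y (\<phi> k) = v} \<noteq> {} \<or> {i\<in>Iu - K. z i = v} \<noteq> {}"
      proof (rule ccontr)
        assume "\<not> ?thesis"
        hence "\<sigma> (u, v) = 0" unfolding row[of v] by (simp only: not_not de_Morgan_disj card.empty add_0)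
        thus False using \<open>v \<in> {v. \<sigma> (u, v) \<noteq> 0}\<close> by simp
      qed
      thus "v \<in> R" unfolding R_def by blast
    qed
    have "(\<Sum>v\<in>R. \<sigma> (u, v)) = (\<Sum>v\<in>R. card {k\<in>Iu \<inter> K. y (\<phi> k) = v}) + (\<Sum>v\<in>R. card {i\<in>Iu - K. z i = v})"
      by (simp add: row sum.distrib)
    also have "\<dots> = card (Iu \<inter> K) + card (Iu - K)"
    proof -
      have s1: "(\<Sum>v\<in>R. card {k\<in>Iu \<inter> K. y (\<phi> k) = v}) = card (Iu \<inter> K)"
        by (rule card_fiber_sum) (use fIu fR in \<open>auto simp: R_def\<close>)
      have s2: "(\<Sum>v\<in>R. card {i\<in>Iu - K. z i = v}) = card (Iu - K)"
        by (rule card_fiber_sum) (use fIu fR in \<open>auto simp: R_def\<close>)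
      show ?thesis by (simp only: s1 s2)
    qed
    also have "\<dots> = card Iu"
    proof -
      have "Iu = (Iu \<inter> K) \<union> (Iu - K)" by blast
      hence "card Iu = card ((Iu \<inter> K) \<union> (Iu - K))" by simp
      also have "\<dots> = card (Iu \<inter> K) + card (Iu - K)" using fIu by (intro card_Un_disjoint) auto
      finally show ?thesis by simp
    qed
    also have "\<dots> = \<alpha> u" by (simp add: aI Iu_def)
    finally show ?thesis using sum_supp_eq[OF fR sub] finite_subset[OF sub fR] by simp
  qed
  have c3: "finite {u. \<sigma> (u, v) \<noteq> 0} \<and> (\<Sum>u\<in>{u. \<sigma> (u, v) \<noteq> 0}. \<sigma> (u, v)) = \<beta> v" if "v \<notin> A" for v
  proof -
    define Jv where "Jv = {j\<in>J. y j = v}"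
    have fJv: "finite Jv" using finJ Jv_def by simp
    define Kv where "Kv = {k\<in>K. y (\<phi> k) = v}"
    have imKv: "\<phi> ` Kv = Jv \<inter> \<phi> ` K" using phiK by (auto simp: Kv_def Jv_def)
    have injKv: "inj_on \<phi> Kv" using inj by (rule inj_on_subset) (auto simp: Kv_def)
    have fKv: "finite Kv" using imKv fJv injKv by (metis finite_Int finite_imageD)
    have cKv: "card Kv = card (Jv \<inter> \<phi> ` K)" using card_image[OF injKv] imKv by simp
    define C where "C = x ` Kv \<union> w ` (Jv - \<phi> ` K)"
    have fC: "finite C" using fKv fJv C_def by simp
    have e2: "{i\<in>I - K. (x i, z i) = (u, v)} = {}" for u using zA that by auto
    have e1: "{k\<in>K. (x k, y (\<phi> k)) = (u, v)} = {k\<in>Kv. x k = u}" for u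
      by (auto simp: Kv_def)
    have e3: "{j\<in>J - \<phi> ` K. (w j, y j) = (u, v)} = {j\<in>Jv - \<phi> ` K. w j = u}" for u
      by (auto simp: Jv_def)
    have col: "\<sigma> (u, v) = card {k\<in>Kv. x k = u} + card {j\<in>Jv - \<phi> ` K. w j = u}" for u
      by (simp only: sig e1 e2 e3 card.empty add_0 add_0_right)
    have sub: "{u. \<sigma> (u, v) \<noteq> 0} \<subseteq> C"
    proof
      fix u assume "u \<in> {u. \<sigma> (u, v) \<noteq> 0}"
      have "{k\<in>Kv. x k = u} \<noteq> {} \<or> {j\<in>Jv - \<phi> ` K. w j = u} \<noteq> {}"
      proof (rule ccontr)
        assume "\<not> ?thesis"
        hence "\<sigma> (u, v) = 0" unfolding col[of u] by (simp only: not_not de_Morgan_disj card.empty add_0)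
        thus False using \<open>u \<in> {u. \<sigma> (u, v) \<noteq> 0}\<close> by simp
      qed
      thus "u \<in> C" unfolding C_def by blast
    qed
    have "(\<Sum>u\<in>C. \<sigma> (u, v)) = (\<Sum>u\<in>C. card {k\<in>Kv. x k = u}) + (\<Sum>u\<in>C. card {j\<in>Jv - \<phi> ` K. w j = u})"
      by (simp add: col sum.distrib)
    also have "\<dots> = card Kv + card (Jv - \<phi> ` K)"
    proof -
      have s1: "(\<Sum>u\<in>C. card {k\<in>Kv. x k = u}) = card Kv"
        by (rule card_fiber_sum) (use fKv fC in \<open>auto simp: C_def\<close>)
      have s2: "(\<Sum>u\<in>C. card {j\<in>Jv - \<phi> ` K. w j = u}) = card (Jv - \<phi> ` K)"
        by (rule card_fiber_sum) (use fJv fC in \<open>auto simp: C_def\<close>)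
      show ?thesis by (simp only: s1 s2)
    qed
    also have "\<dots> = card Jv"
    proof -
      have "Jv = (Jv \<inter> \<phi> ` K) \<union> (Jv - \<phi> ` K)" by blast
      hence "card Jv = card ((Jv \<inter> \<phi> ` K) \<union> (Jv - \<phi> ` K))" by simp
      also have "\<dots> = card (Jv \<inter> \<phi> ` K) + card (Jv - \<phi> ` K)" using fJv by (intro card_Un_disjoint) auto
      finally show ?thesis using cKv by simp
    qed
    also have "\<dots> = \<beta> v" by (simp add: bJ Jv_def)
    finally show ?thesis using sum_supp_eq[OF fC sub] finite_subset[OF sub fC] by simp
  qed
  have c4: "countable {q. \<sigma> q \<noteq> 0}"
  proof (rule countable_subset)
    show "{q. \<sigma> q \<noteq> 0} \<subseteq> (\<lambda>k. (x k, y (\<phi> k))) ` K \<union> (\<lambda>i. (x i, z i)) ` (I - K) \<union> (\<lambda>j. (w j, y j)) ` (J - \<phi> ` K)"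
    proof
      fix q assume "q \<in> {q. \<sigma> q \<noteq> 0}"
      have "{k\<in>K. (x k, y (\<phi> k)) = q} \<noteq> {} \<or> {i\<in>I - K. (x i, z i) = q} \<noteq> {} \<or> {j\<in>J - \<phi> ` K. (w j, y j) = q} \<noteq> {}"
      proof (rule ccontr)
        assume "\<not> ?thesis"
        hence "\<sigma> q = 0" by (simp only: sig de_Morgan_disj not_not card.empty add_0)
        thus False using \<open>q \<in> {q. \<sigma> q \<noteq> 0}\<close> by simp
      qed
      thus "q \<in> (\<lambda>k. (x k, y (\<phi> k))) ` K \<union> (\<lambda>i. (x i, z i)) ` (I - K) \<union> (\<lambda>j. (w j, y j)) ` (J - \<phi> ` K)"
        by blast
    qed
  qed auto
  show ?thesis unfolding mok_def using c1 c2 c3 c4 by blast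
qed


lemma fsum_exists:
  fixes f :: "'b \<Rightarrow> nat"
  assumes "countable {q. f q \<noteq> 0}"
  shows "\<exists>(L::nat set) lm. (\<forall>l\<in>L. f (lm l) \<noteq> 0) \<and> (\<forall>q. finite {l\<in>L. lm l = q} \<and> card {l\<in>L. lm l = q} = f q)"
proof -
  define S where "S = {q. f q \<noteq> 0}"
  define P where "P = Sigma S (\<lambda>q. {..<f q})"
  have cP: "countable P" unfolding P_def using assms S_def by (intro countable_SIGMA) auto
  define g where "g = to_nat_on P"
  have inj: "inj_on g P" unfolding g_def using cP by (rule inj_on_to_nat_on)
  define L where "L = g ` P"
  define lm where "lm l = fst (from_nat_into P l)" for l
  have lg: "lm (g p) = fst p" if "p \<in> P" for p
    unfolding lm_def g_def using from_nat_into_to_nat_on[OF cP that] by simp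
  have 1: "\<forall>l\<in>L. f (lm l) \<noteq> 0" using lg by (auto simp: L_def P_def S_def)
  have 2: "finite {l\<in>L. lm l = q} \<and> card {l\<in>L. lm l = q} = f q" for q
  proof -
    have eq: "{l\<in>L. lm l = q} = g ` {p\<in>P. fst p = q}" using lg by (auto simp: L_def)
    have eq2: "{p\<in>P. fst p = q} = {q} \<times> {..<f q}" by (auto simp: P_def S_def)
    have inj2: "inj_on g ({q} \<times> {..<f q})" using inj by (rule inj_on_subset) (auto simp: P_def S_def)
    show ?thesis unfolding eq eq2 using card_image[OF inj2] by (simp add: card_cartesian_product)
  qed
  show ?thesis using 1 2 by blast
qed

lemma mok_matching:
  assumes a: "\<alpha> \<in> dgm A" and b: "\<beta> \<in> dgm A" and m: "mok A \<alpha> \<beta> \<sigma>"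
  shows "is_matching A \<alpha> \<beta> \<sigma>"
proof -
  have vanish: "\<And>u v. u \<in> A \<Longrightarrow> v \<in> A \<Longrightarrow> \<sigma> (u, v) = 0"
    using m unfolding mok_def by simp
  have row: "\<And>u. u \<notin> A \<Longrightarrow> finite {v. \<sigma> (u, v) \<noteq> 0} \<and> (\<Sum>v\<in>{v. \<sigma> (u, v) \<noteq> 0}. \<sigma> (u, v)) = \<alpha> u"
    using m unfolding mok_def by simp
  have col: "\<And>v. v \<notin> A \<Longrightarrow> finite {u. \<sigma> (u, v) \<noteq> 0} \<and> (\<Sum>u\<in>{u. \<sigma> (u, v) \<noteq> 0}. \<sigma> (u, v)) = \<beta> v"
    using m unfolding mok_def by simp
  have cnt: "countable {q. \<sigma> q \<noteq> 0}"
    using m unfolding mok_def by simp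
  obtain L :: "nat set" and lm :: "nat \<Rightarrow> 'a \<times> 'a" where Lnz: "\<forall>l\<in>L. \<sigma> (lm l) \<noteq> 0"
    and LL: "\<forall>q. finite {l\<in>L. lm l = q} \<and> card {l\<in>L. lm l = q} = \<sigma> q"
    using fsum_exists[OF cnt] by blast
  have Lf: "\<And>q. finite {l\<in>L. lm l = q}" and Lc: "\<And>q. card {l\<in>L. lm l = q} = \<sigma> q"
    using LL by blast+
  have notboth: "fst (lm l) \<notin> A \<or> snd (lm l) \<notin> A" if "l \<in> L" for l
  proof (rule ccontr)
    assume "\<not> (fst (lm l) \<notin> A \<or> snd (lm l) \<notin> A)"
    hence "\<sigma> (lm l) = 0" using vanish by (cases "lm l") auto
    thus False using Lnz that by auto
  qed
  define I where "I = {l\<in>L. fst (lm l) \<notin> A}"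
  define J where "J = {l\<in>L. snd (lm l) \<notin> A}"
  define x where "x = (\<lambda>l. fst (lm l))"
  define y where "y = (\<lambda>l. snd (lm l))"
  define K where "K = I \<inter> J"
  have fsa: "is_fsum A \<alpha> I x"
    unfolding is_fsum_def
  proof (intro conjI)
    show "\<forall>i\<in>I. x i \<notin> A" by (auto simp: I_def x_def)
    show "\<forall>u. finite {i \<in> I. x i = u} \<and> \<alpha> u = card {i \<in> I. x i = u}"
    proof
    fix u
    show "finite {i \<in> I. x i = u} \<and> \<alpha> u = card {i \<in> I. x i = u}"
    proof (cases "u \<in> A")
      case True
      hence "{i \<in> I. x i = u} = {}" by (auto simp: I_def x_def)
      moreover have "\<alpha> u = 0" using a True by (simp add: dgm_def)
      ultimately show ?thesis by (metis card.empty finite.emptyI)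
    next
      case False
      define R where "R = {v. \<sigma> (u, v) \<noteq> 0}"
      have fR: "finite R" and sR: "(\<Sum>v\<in>R. \<sigma> (u, v)) = \<alpha> u" using row[OF False] by (auto simp: R_def)
      have eq: "{i \<in> I. x i = u} = (\<Union>v\<in>R. {l\<in>L. lm l = (u, v)})"
      proof
        show "{i \<in> I. x i = u} \<subseteq> (\<Union>v\<in>R. {l\<in>L. lm l = (u, v)})"
        proof
          fix i assume i: "i \<in> {i \<in> I. x i = u}"
          obtain v0 where v0: "lm i = (u, v0)" using i by (cases "lm i") (auto simp: x_def)
          moreover have "\<sigma> (lm i) \<noteq> 0" using Lnz i by (auto simp: I_def)
          ultimately have "v0 \<in> R" by (simp add: R_def)
          thus "i \<in> (\<Union>v\<in>R. {l\<in>L. lm l = (u, v)})" using i v0 by (auto simp: I_def)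
        qed
      next
        show "(\<Union>v\<in>R. {l\<in>L. lm l = (u, v)}) \<subseteq> {i \<in> I. x i = u}"
          using False by (auto simp: I_def x_def)
      qed
      have "card (\<Union>v\<in>R. {l\<in>L. lm l = (u, v)}) = (\<Sum>v\<in>R. card {l\<in>L. lm l = (u, v)})"
        using fR Lf by (intro card_UN_disjoint) auto
      also have "\<dots> = \<alpha> u" using sR Lc by simp
      finally show ?thesis using eq fR Lf by auto
    qed
    qed
  qed
  have fsb: "is_fsum A \<beta> J y"
    unfolding is_fsum_def
  proof (intro conjI)
    show "\<forall>i\<in>J. y i \<notin> A" by (auto simp: J_def y_def)
    show "\<forall>v. finite {i \<in> J. y i = v} \<and> \<beta> v = card {i \<in> J. y i = v}"
    proof
    fix v
    show "finite {i \<in> J. y i = v} \<and> \<beta> v = card {i \<in> J. y i = v}"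
    proof (cases "v \<in> A")
      case True
      hence "{i \<in> J. y i = v} = {}" by (auto simp: J_def y_def)
      moreover have "\<beta> v = 0" using b True by (simp add: dgm_def)
      ultimately show ?thesis by (metis card.empty finite.emptyI)
    next
      case False
      define R where "R = {u. \<sigma> (u, v) \<noteq> 0}"
      have fR: "finite R" and sR: "(\<Sum>u\<in>R. \<sigma> (u, v)) = \<beta> v" using col[OF False] by (auto simp: R_def)
      have eq: "{i \<in> J. y i = v} = (\<Union>u\<in>R. {l\<in>L. lm l = (u, v)})"
      proof
        show "{i \<in> J. y i = v} \<subseteq> (\<Union>u\<in>R. {l\<in>L. lm l = (u, v)})"
        proof
          fix i assume i: "i \<in> {i \<in> J. y i = v}"
          obtain u0 where u0: "lm i = (u0, v)" using i by (cases "lm i") (auto simp: y_def)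
          moreover have "\<sigma> (lm i) \<noteq> 0" using Lnz i by (auto simp: J_def)
          ultimately have "u0 \<in> R" by (simp add: R_def)
          thus "i \<in> (\<Union>u\<in>R. {l\<in>L. lm l = (u, v)})" using i u0 by (auto simp: J_def)
        qed
      next
        show "(\<Union>u\<in>R. {l\<in>L. lm l = (u, v)}) \<subseteq> {i \<in> J. y i = v}"
          using False by (auto simp: J_def y_def)
      qed
      have "card (\<Union>u\<in>R. {l\<in>L. lm l = (u, v)}) = (\<Sum>u\<in>R. card {l\<in>L. lm l = (u, v)})"
        using fR Lf by (intro card_UN_disjoint) auto
      also have "\<dots> = \<beta> v" using sR Lc by simp
      finally show ?thesis using eq fR Lf by auto
    qed
    qed
  qed
  have sig: "\<sigma> = (\<lambda>q. card {k\<in>K. (x k, y (id k)) = q} + card {i\<in>I - K. (x i, y i) = q}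
                 + card {j\<in>J - id ` K. (x j, y j) = q})"
  proof
    fix q
    define Lq where "Lq = {l\<in>L. lm l = q}"
    have xy: "\<And>l. (x l, y l) = lm l" by (simp add: x_def y_def)
    have e1: "{k\<in>K. (x k, y (id k)) = q} = Lq \<inter> K" by (auto simp: Lq_def K_def I_def xy)
    have e2: "{i\<in>I - K. (x i, y i) = q} = Lq \<inter> (I - K)" by (auto simp: Lq_def K_def I_def xy)
    have e3: "{j\<in>J - id ` K. (x j, y j) = q} = Lq \<inter> (J - K)" by (auto simp: Lq_def K_def J_def xy)
    have fLq: "finite Lq" using Lf Lq_def by simp
    have un: "Lq = (Lq \<inter> K) \<union> (Lq \<inter> (I - K)) \<union> (Lq \<inter> (J - K))"
      using notboth by (auto simp: Lq_def K_def I_def J_def)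
    have "card Lq = card ((Lq \<inter> K) \<union> (Lq \<inter> (I - K))) + card (Lq \<inter> (J - K))"
      using fLq by (subst un, intro card_Un_disjoint) (auto simp: K_def)
    also have "card ((Lq \<inter> K) \<union> (Lq \<inter> (I - K))) = card (Lq \<inter> K) + card (Lq \<inter> (I - K))"
      using fLq by (intro card_Un_disjoint) auto
    finally have "card Lq = card (Lq \<inter> K) + card (Lq \<inter> (I - K)) + card (Lq \<inter> (J - K))" .
    thus "\<sigma> q = card {k\<in>K. (x k, y (id k)) = q} + card {i\<in>I - K. (x i, y i) = q}
                 + card {j\<in>J - id ` K. (x j, y j) = q}"
      by (simp only: e1 e2 e3 Lc[of q, symmetric] Lq_def)
  qed
  show ?thesis unfolding is_matching_def
  proof (intro exI conjI)
    show "is_fsum A \<alpha> I x" by (rule fsa)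
    show "is_fsum A \<beta> J y" by (rule fsb)
    show "K \<subseteq> I" by (simp add: K_def)
    show "inj_on id K" by simp
    show "id ` K \<subseteq> J" by (simp add: K_def)
    show "\<forall>i\<in>I - K. y i \<in> A" by (auto simp: K_def I_def J_def y_def)
    show "\<forall>j\<in>J - id ` K. x j \<in> A" by (auto simp: K_def I_def J_def x_def)
  qed (rule sig)
qed


lemma setdist_le: "a \<in> A \<Longrightarrow> setdist d u A \<le> d u a"
  unfolding setdist_def by (rule INF_lower)

lemma setdist_tri:
  assumes "emetric d" shows "setdist d u A \<le> d u w + setdist d w A"
proof (rule ennreal_le_epsilon)
  fix e :: real assume lt: "d u w + setdist d w A < top" and e: "0 < e"
  hence "setdist d w A < top" by (simp add: less_top)
  hence "setdist d w A < setdist d w A + ennreal e" using e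
    by (cases "setdist d w A") (auto simp: ennreal_plus[symmetric] ennreal_less_iff simp del: ennreal_plus)
  then obtain a where a: "a \<in> A" "d w a < setdist d w A + ennreal e"
    unfolding setdist_def by (auto simp: INF_less_iff)
  have "setdist d u A \<le> d u a" by (rule setdist_le[OF a(1)])
  also have "\<dots> \<le> d u w + d w a" using assms unfolding emetric_def by blast
  also have "\<dots> \<le> d u w + (setdist d w A + ennreal e)" using a(2) by (intro add_left_mono) simp
  finally show "setdist d u A \<le> d u w + setdist d w A + ennreal e" by (simp add: add.assoc)
qed

lemma Cost_ge_point:
  assumes p: "1 \<le> p" and q: "\<sigma> q \<noteq> 0"
  shows "d (fst q) (snd q) \<le> Cost d p \<sigma>"
proof (cases "p = \<infinity>")
  case True thus ?thesis using q unfolding Cost_def by (auto intro!: SUP_upper)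
next
  case False
  define r where "r = enn2real p"
  have r: "r \<ge> 1" using p False unfolding r_def
    by (cases p) (auto simp flip: ennreal_1 simp: ennreal_le_iff)
  have "enn_powr (d (fst q) (snd q)) r \<le> of_nat (\<sigma> q) * enn_powr (d (fst q) (snd q)) r"
    using q by (cases "\<sigma> q") (auto simp: distrib_right)
  also have "\<dots> \<le> (\<integral>\<^sup>+ q'. of_nat (\<sigma> q') * enn_powr (d (fst q') (snd q')) r \<partial>count_space UNIV)"
    using finite_sum_le_nn[of "{q}" "\<lambda>q'. of_nat (\<sigma> q') * enn_powr (d (fst q') (snd q')) r"] by simp
  finally have "enn_powr (enn_powr (d (fst q) (snd q)) r) (1/r) \<le> Cost d p \<sigma>"
    unfolding Cost_def using False r by (simp add: r_def enn_powr_mono)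
  thus ?thesis using enn_powr_inv[of r] r by simp
qed

lemma Cost_le_iff:
  assumes p: "1 \<le> p" "p \<noteq> \<infinity>"
  shows "Cost d p \<sigma> \<le> c \<longleftrightarrow>
    (\<integral>\<^sup>+ q. of_nat (\<sigma> q) * enn_powr (d (fst q) (snd q)) (enn2real p) \<partial>count_space UNIV) \<le> enn_powr c (enn2real p)"
proof -
  have r: "enn2real p > 0" using p by (cases p) (auto simp flip: ennreal_1 simp: ennreal_le_iff)
  show ?thesis unfolding Cost_def using p enn_powr_le_iff[OF r] by simp
qed

lemma card_bound_finite:
  fixes c I :: ennreal
  assumes "\<And>F. finite F \<Longrightarrow> F \<subseteq> S \<Longrightarrow> of_nat (card F) * c \<le> I" "c > 0" "I < \<infinity>"
  shows "finite S"
proof (rule ccontr)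
  assume inf: "infinite S"
  obtain i where i: "I = ennreal i" "i \<ge> 0" using assms(3) by (cases I) auto
  have m: "0 < min c 1" "min c 1 < top" using assms(2) by (auto simp: min_less_iff_disj)
  obtain c0 where c0: "min c 1 = ennreal c0" "c0 \<ge> 0" using m(2) by (cases "min c 1") auto
  have c': "min c 1 = ennreal c0" "c0 > 0" using c0 m(1) by auto
  define c' where "c' = c0"
  have c': "min c 1 = ennreal c'" "c' > 0" using c' by (auto simp: c'_def)
  obtain n :: nat where n: "real n * c' > i" using c'(2)
    by (metis reals_Archimedean3)
  obtain F where F: "finite F" "F \<subseteq> S" "card F = n" using infinite_arbitrarily_large[OF inf] by blast
  have "ennreal (real n * c') = of_nat n * min c 1" using c' by (simp add: ennreal_mult ennreal_of_nat_eq_real_of_nat)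
  also have "\<dots> \<le> of_nat n * c" by (intro mult_left_mono) auto
  also have "\<dots> \<le> I" using assms(1)[OF F(1,2)] F(3) by simp
  finally have "real n * c' \<le> i" using i by (simp add: ennreal_le_iff)
  thus False using n by simp
qed

lemma dsize_finite:
  assumes "dsize f < \<infinity>" shows "finite {x. f x \<noteq> 0}"
proof (rule card_bound_finite[where c=1 and I="dsize f"])
  fix F assume F: "finite F" "F \<subseteq> {x. f x \<noteq> 0}"
  have "of_nat (card F) = (\<Sum>x\<in>F. (1::ennreal))" by simp
  also have "\<dots> \<le> (\<Sum>x\<in>F. of_nat (f x))" using F by (intro sum_mono) (auto simp: ennreal_of_nat_eq_real_of_nat)
  also have "\<dots> \<le> dsize f" unfolding dsize_def by (rule finite_sum_le_nn[OF F(1)])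
  finally show "of_nat (card F) * 1 \<le> dsize f" by simp
qed (use assms in auto)


lemma mok_row: "mok A \<alpha> \<beta> \<sigma> \<Longrightarrow> u \<notin> A \<Longrightarrow> finite {v. \<sigma> (u, v) \<noteq> 0} \<and> (\<Sum>v\<in>{v. \<sigma> (u, v) \<noteq> 0}. \<sigma> (u, v)) = \<alpha> u"
  unfolding mok_def by simp
lemma mok_col: "mok A \<alpha> \<beta> \<sigma> \<Longrightarrow> v \<notin> A \<Longrightarrow> finite {u. \<sigma> (u, v) \<noteq> 0} \<and> (\<Sum>u\<in>{u. \<sigma> (u, v) \<noteq> 0}. \<sigma> (u, v)) = \<beta> v"
  unfolding mok_def by simp
lemma mok_AA: "mok A \<alpha> \<beta> \<sigma> \<Longrightarrow> u \<in> A \<Longrightarrow> v \<in> A \<Longrightarrow> \<sigma> (u, v) = 0"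
  unfolding mok_def by simp
lemma mok_cnt: "mok A \<alpha> \<beta> \<sigma> \<Longrightarrow> countable {q. \<sigma> q \<noteq> 0}"
  unfolding mok_def by simp

lemma mok_row_sum:
  assumes "mok A \<alpha> \<beta> \<sigma>" "u \<notin> A" "finite R" "{v. \<sigma> (u, v) \<noteq> 0} \<subseteq> R"
  shows "(\<Sum>v\<in>R. \<sigma> (u, v)) = \<alpha> u"
  using mok_row[OF assms(1,2)] sum_supp_eq[OF assms(3,4)] by simp

lemma mok_col_sum:
  assumes "mok A \<alpha> \<beta> \<sigma>" "v \<notin> A" "finite R" "{u. \<sigma> (u, v) \<noteq> 0} \<subseteq> R"
  shows "(\<Sum>u\<in>R. \<sigma> (u, v)) = \<beta> v"
  using mok_col[OF assms(1,2)] sum_supp_eq[of R "\<lambda>u. \<sigma> (u, v)"] assms(3,4) by simp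

lemma mok_le_row:
  assumes "mok A \<alpha> \<beta> \<sigma>" "u \<notin> A" shows "\<sigma> (u, v) \<le> \<alpha> u"
proof (cases "\<sigma> (u, v) = 0")
  case False
  have f: "finite {v. \<sigma> (u, v) \<noteq> 0}" using mok_row[OF assms] by simp
  have "\<sigma> (u, v) \<le> (\<Sum>v\<in>{v. \<sigma> (u, v) \<noteq> 0}. \<sigma> (u, v))"
    using False by (intro member_le_sum f) auto
  thus ?thesis using mok_row[OF assms] by simp
qed simp

lemma mok_le_col:
  assumes "mok A \<alpha> \<beta> \<sigma>" "v \<notin> A" shows "\<sigma> (u, v) \<le> \<beta> v"
proof (cases "\<sigma> (u, v) = 0")
  case False
  have f: "finite {u. \<sigma> (u, v) \<noteq> 0}" using mok_col[OF assms] by simp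
  have "\<sigma> (u, v) \<le> (\<Sum>u\<in>{u. \<sigma> (u, v) \<noteq> 0}. \<sigma> (u, v))"
    using False by (intro member_le_sum[of u _ "\<lambda>u. \<sigma> (u, v)"] f) auto
  thus ?thesis using mok_col[OF assms] by simp
qed simp

locale lim_setup =
  fixes d :: "'a \<Rightarrow> 'a \<Rightarrow> ennreal" and A :: "'a set" and \<alpha> \<beta> :: "'a \<Rightarrow> nat"
    and s :: "nat \<Rightarrow> 'a \<times> 'a \<Rightarrow> nat" and p W :: ennreal
  assumes em: "emetric d" and dm: "dist_minimizing d A"
    and a: "\<alpha> \<in> dgm A" and b: "\<beta> \<in> dgm A"
    and far_a: "\<And>\<delta>::real. \<delta> > 0 \<Longrightarrow> finite {u. \<alpha> u \<noteq> 0 \<and> ennreal \<delta> \<le> setdist d u A}"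
    and far_b: "\<And>\<delta>::real. \<delta> > 0 \<Longrightarrow> finite {u. \<beta> u \<noteq> 0 \<and> ennreal \<delta> \<le> setdist d u A}"
    and ms: "\<And>n. mok A \<alpha> \<beta> (s n)"
    and p: "1 \<le> p" and Wfin: "W < \<infinity>"
    and cs: "\<And>n. Cost d p (s n) \<le> W + ennreal (1 / Suc n)"
begin

lemma aA: "u \<in> A \<Longrightarrow> \<alpha> u = 0" using a by (simp add: dgm_def)
lemma bA: "u \<in> A \<Longrightarrow> \<beta> u = 0" using b by (simp add: dgm_def)

lemma s_zero: "fst q \<notin> A \<Longrightarrow> snd q \<notin> A \<Longrightarrow> \<alpha> (fst q) = 0 \<or> \<beta> (snd q) = 0 \<Longrightarrow> s n q = 0"
  using mok_le_row[OF ms, of "fst q" n "snd q"] mok_le_col[OF ms, of "snd q" n "fst q"] by auto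

lemma subseq_exists:
  "\<exists>r \<tau>. strict_mono r \<and> (\<forall>q. \<alpha> (fst q) = 0 \<or> \<beta> (snd q) = 0 \<longrightarrow> \<tau> q = 0) \<and>
     (\<forall>q. fst q \<notin> A \<longrightarrow> snd q \<notin> A \<longrightarrow> eventually (\<lambda>n. s (r n) q = \<tau> q) sequentially)"
proof -
  define P where "P = {q. \<alpha> (fst q) \<noteq> 0 \<and> \<beta> (snd q) \<noteq> 0}"
  have cP: "countable P"
  proof -
    have "P \<subseteq> {u. \<alpha> u \<noteq> 0} \<times> {v. \<beta> v \<noteq> 0}" by (auto simp: P_def)
    moreover have "countable ({u. \<alpha> u \<noteq> 0} \<times> {v. \<beta> v \<noteq> 0})"
      using a b by (simp add: dgm_def)
    ultimately show ?thesis by (rule countable_subset)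
  qed
  define e where "e k = from_nat_into P k" for k
  define f where "f n k = s n (e k)" for n k
  define bd where "bd k = (if fst (e k) \<notin> A then \<alpha> (fst (e k)) else \<beta> (snd (e k)))" for k
  have "f n k \<le> bd k" for n k
  proof (cases "fst (e k) \<notin> A")
    case True thus ?thesis using mok_le_row[OF ms True, of n "snd (e k)"] by (simp add: f_def bd_def)
  next
    case False
    show ?thesis
    proof (cases "snd (e k) \<in> A")
      case True
      hence "s n (e k) = 0" using mok_AA[OF ms, of "fst (e k)" "snd (e k)" n] False by simp
      thus ?thesis by (simp add: f_def)
    next
      case F2: False
      thus ?thesis using mok_le_col[OF ms F2, of n "fst (e k)"] False by (simp add: f_def bd_def)
    qed
  qed
  then obtain r t where r: "strict_mono r" and t: "\<forall>k. eventually (\<lambda>n. f (r n) k = t k) sequentially"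
    using subseq_nat_bounded[of f bd] by blast
  define \<tau> where "\<tau> q = (if q \<in> P then t (to_nat_on P q) else 0)" for q
  have 1: "\<forall>q. \<alpha> (fst q) = 0 \<or> \<beta> (snd q) = 0 \<longrightarrow> \<tau> q = 0" by (auto simp: \<tau>_def P_def)
  have 2: "eventually (\<lambda>n. s (r n) q = \<tau> q) sequentially" if "fst q \<notin> A" "snd q \<notin> A" for q
  proof (cases "q \<in> P")
    case True
    have "e (to_nat_on P q) = q" unfolding e_def using from_nat_into_to_nat_on[OF cP True] .
    thus ?thesis using t[rule_format, of "to_nat_on P q"] True by (simp add: f_def \<tau>_def)
  next
    case False
    hence "s n q = 0" for n using s_zero[OF that] by (auto simp: P_def)
    thus ?thesis using False by (simp add: \<tau>_def)
  qed
  show ?thesis using r 1 2 by blast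
qed

end


lemma enn2real_ennreal_max: "enn2real (ennreal y) = max y 0"
  by (cases "y \<ge> 0") (auto simp: ennreal_neg)

lemma enn_powr_cont:
  assumes r: "r > 0"
  shows "(\<lambda>k::nat. enn_powr (t - ennreal (1 / Suc k)) r) \<longlonglongrightarrow> enn_powr t r"
proof (cases "t = \<infinity>")
  case True thus ?thesis by (simp add: enn_powr_def)
next
  case False
  then obtain c where c: "t = ennreal c" "c \<ge> 0" by (cases t) auto
  have eq: "enn_powr (t - ennreal (1 / Suc k)) r = ennreal (max (c - 1 / Suc k) 0 powr r)" for k
    using c by (simp add: enn_powr_def ennreal_minus enn2real_ennreal_max del: of_nat_Suc)
  have z: "(\<lambda>k. 1 / real (Suc k)) \<longlonglongrightarrow> 0"
    using LIMSEQ_inverse_real_of_nat by (simp add: inverse_eq_divide del: of_nat_Suc)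
  have "(\<lambda>k::nat. max (c - 1 / Suc k) 0) \<longlonglongrightarrow> max (c - 0) 0"
    by (intro tendsto_intros z)
  hence l: "(\<lambda>k::nat. max (c - 1 / Suc k) 0) \<longlonglongrightarrow> c" using c by simp
  have "(\<lambda>k::nat. max (c - 1 / Suc k) 0 powr r) \<longlonglongrightarrow> c powr r"
    by (rule tendsto_powr2[OF l tendsto_const]) (use r in auto)
  hence "(\<lambda>k::nat. ennreal (max (c - 1 / Suc k) 0 powr r)) \<longlonglongrightarrow> ennreal (c powr r)"
    by (rule tendsto_ennrealI)
  moreover have "(\<lambda>k::nat. enn_powr (t - ennreal (1 / Suc k)) r) = (\<lambda>k::nat. ennreal (max (c - 1 / Suc k) 0 powr r))"
    by (intro ext) (rule eq)
  ultimately show ?thesis using c by (simp add: enn_powr_def)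
qed

lemma mok_row_le_sum:
  assumes "mok A \<alpha> \<beta> \<sigma>" "u \<notin> A" "finite F"
  shows "(\<Sum>v\<in>F. \<sigma> (u, v)) \<le> \<alpha> u"
proof -
  define R where "R = {v. \<sigma> (u, v) \<noteq> 0}"
  have fR: "finite R" using mok_row[OF assms(1,2)] R_def by simp
  have "(\<Sum>v\<in>F. \<sigma> (u, v)) = (\<Sum>v\<in>F \<inter> R. \<sigma> (u, v))"
    using assms(3) by (intro sum.mono_neutral_right) (auto simp: R_def)
  also have "\<dots> \<le> (\<Sum>v\<in>R. \<sigma> (u, v))" using fR by (intro sum_mono2) auto
  also have "\<dots> = \<alpha> u" using mok_row[OF assms(1,2)] R_def by simp
  finally show ?thesis .
qed

locale lim2 = lim_setup +
  fixes r :: "nat \<Rightarrow> nat" and \<tau> :: "'a \<times> 'a \<Rightarrow> nat"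
  assumes r: "strict_mono r"
    and \<tau>0: "\<And>q. \<alpha> (fst q) = 0 \<or> \<beta> (snd q) = 0 \<Longrightarrow> \<tau> q = 0"
    and \<tau>lim: "\<And>q. fst q \<notin> A \<Longrightarrow> snd q \<notin> A \<Longrightarrow> eventually (\<lambda>n. s (r n) q = \<tau> q) sequentially"
begin

definition "rowt u = {v. \<tau> (u, v) \<noteq> 0}"
definition "rema u = \<alpha> u - (\<Sum>v\<in>rowt u. \<tau> (u, v))"

lemma \<tau>_nz: assumes h: "\<tau> (u, v) \<noteq> 0" shows "\<alpha> u \<noteq> 0 \<and> \<beta> v \<noteq> 0 \<and> u \<notin> A \<and> v \<notin> A"
proof -
  have 1: "\<alpha> u \<noteq> 0" using \<tau>0[of "(u, v)"] h by force
  have 2: "\<beta> v \<noteq> 0" using \<tau>0[of "(u, v)"] h by force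
  show ?thesis using 1 2 aA[of u] bA[of v] by auto
qed

lemma ev_fin:
  assumes "finite Q" "\<And>q. q \<in> Q \<Longrightarrow> fst q \<notin> A \<and> snd q \<notin> A"
  shows "eventually (\<lambda>n. \<forall>q\<in>Q. s (r n) q = \<tau> q) sequentially"
  using assms by (intro eventually_ball_finite) (auto intro: \<tau>lim)

lemma ev_cost:
  assumes "(\<eta>::real) > 0" shows "eventually (\<lambda>n. Cost d p (s (r n)) \<le> W + ennreal \<eta>) sequentially"
proof -
  obtain N :: nat where N0: "inverse (real (Suc N)) < \<eta>"
    using reals_Archimedean[OF assms] by blast
  hence N: "1 / Suc N < \<eta>" by (simp add: inverse_eq_divide)
  have "Cost d p (s (r n)) \<le> W + ennreal \<eta>" if "n \<ge> N" for n
  proof -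
    have "r n \<ge> n" using r by (rule strict_mono_imp_increasing)
    hence "1 / real (Suc (r n)) \<le> 1 / Suc N" using that by (intro divide_left_mono) auto
    hence "ennreal (1 / Suc (r n)) \<le> ennreal \<eta>" using N by (intro ennreal_leI) simp
    hence "W + ennreal (1 / Suc (r n)) \<le> W + ennreal \<eta>" by (rule add_left_mono)
    thus ?thesis using cs[of "r n"] by (rule order_trans[rotated])
  qed
  thus ?thesis by (auto simp: eventually_sequentially)
qed

lemma rowt_sub_le:
  assumes "finite F" "F \<subseteq> rowt u"
  shows "(\<Sum>v\<in>F. \<tau> (u, v)) \<le> \<alpha> u"
proof (cases "F = {}")
  case False
  then obtain v0 where "v0 \<in> F" by auto
  hence uA: "u \<notin> A" using assms \<tau>_nz by (auto simp: rowt_def)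
  have "eventually (\<lambda>n. \<forall>q\<in>{u} \<times> F. s (r n) q = \<tau> q) sequentially"
    using assms \<tau>_nz uA by (intro ev_fin) (auto simp: rowt_def)
  then obtain N where "\<forall>n\<ge>N. \<forall>q\<in>{u} \<times> F. s (r n) q = \<tau> q"
    unfolding eventually_sequentially by blast
  hence n: "\<forall>q\<in>{u} \<times> F. s (r N) q = \<tau> q" by simp
  have "(\<Sum>v\<in>F. \<tau> (u, v)) = (\<Sum>v\<in>F. s (r N) (u, v))" using n by (intro sum.cong) auto
  also have "\<dots> \<le> \<alpha> u" by (rule mok_row_le_sum[OF ms uA assms(1)])
  finally show ?thesis .
qed simp

lemma rowt_finite: "finite (rowt u)"
proof -
  have "finite (rowt u) \<and> card (rowt u) \<le> \<alpha> u"
  proof (rule finite_if_finite_subsets_card_bdd)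
  fix F assume F: "F \<subseteq> rowt u" "finite F"
  have "card F = (\<Sum>v\<in>F. 1)" by simp
  also have "\<dots> \<le> (\<Sum>v\<in>F. \<tau> (u, v))" using F by (intro sum_mono) (auto simp: rowt_def)
  also have "\<dots> \<le> \<alpha> u" using rowt_sub_le F by simp
  finally show "card F \<le> \<alpha> u" .
  qed
  thus ?thesis by simp
qed

lemma rowt_le: "(\<Sum>v\<in>rowt u. \<tau> (u, v)) \<le> \<alpha> u"
  using rowt_sub_le[OF rowt_finite] by simp

lemma rowt_sub: "rowt u \<subseteq> {v. \<beta> v \<noteq> 0} - A"
  using \<tau>_nz by (auto simp: rowt_def)

lemma rema_pos: "rema u > 0 \<Longrightarrow> u \<notin> A \<and> \<alpha> u \<noteq> 0"
  using aA by (auto simp: rema_def)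

lemma escape:
  assumes uA: "u \<notin> A" and fN: "finite N" and sub: "rowt u \<subseteq> N" and NA: "N \<inter> A = {}"
  shows "eventually (\<lambda>n. (\<Sum>v\<in>{v. s (r n) (u, v) \<noteq> 0} - N. s (r n) (u, v)) = rema u) sequentially"
proof -
  have "eventually (\<lambda>n. \<forall>q\<in>{u} \<times> N. s (r n) q = \<tau> q) sequentially"
    using fN NA uA by (intro ev_fin) auto
  moreover have "(\<Sum>v\<in>{v. s (r n) (u, v) \<noteq> 0} - N. s (r n) (u, v)) = rema u"
    if n: "\<forall>q\<in>{u} \<times> N. s (r n) q = \<tau> q" for n
  proof -
    define R where "R = {v. s (r n) (u, v) \<noteq> 0}"
    have fR: "finite R" using mok_row[OF ms uA] R_def by simp
    have "\<alpha> u = (\<Sum>v\<in>R. s (r n) (u, v))" using mok_row[OF ms uA] R_def by simp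
    also have "\<dots> = (\<Sum>v\<in>R \<inter> N. s (r n) (u, v)) + (\<Sum>v\<in>R - N. s (r n) (u, v))"
      by (rule sum.Int_Diff[OF fR])
    also have "(\<Sum>v\<in>R \<inter> N. s (r n) (u, v)) = (\<Sum>v\<in>N. s (r n) (u, v))"
      using fN by (intro sum.mono_neutral_left) (auto simp: R_def)
    also have "\<dots> = (\<Sum>v\<in>N. \<tau> (u, v))" using n by (intro sum.cong) auto
    also have "\<dots> = (\<Sum>v\<in>rowt u. \<tau> (u, v))"
      using fN sub by (intro sum.mono_neutral_right) (auto simp: rowt_def)
    finally have "\<alpha> u = (\<Sum>v\<in>rowt u. \<tau> (u, v)) + (\<Sum>v\<in>R - N. s (r n) (u, v))" .
    thus ?thesis by (simp add: rema_def R_def)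
  qed
  ultimately show ?thesis by (rule eventually_mono)
qed

end


context lim2 begin

lemma esc_le:
  assumes nz: "s n (u, v) \<noteq> 0" and vN: "v \<notin> N" and far: "{w. \<beta> w \<noteq> 0 \<and> ennreal \<delta> \<le> setdist d w A} \<subseteq> N"
  shows "setdist d u A - ennreal \<delta> \<le> d u v"
proof (cases "v \<in> A")
  case True
  have "setdist d u A - ennreal \<delta> \<le> setdist d u A" by (rule diff_le_self_ennreal)
  also have "\<dots> \<le> d u v" by (rule setdist_le[OF True])
  finally show ?thesis .
next
  case False
  have "\<beta> v \<noteq> 0" using mok_le_col[OF ms False, of n u] nz by simp
  hence "\<not> ennreal \<delta> \<le> setdist d v A" using vN far by blast
  hence lt: "setdist d v A \<le> ennreal \<delta>" by simp
  have "setdist d u A \<le> d u v + setdist d v A" by (rule setdist_tri[OF em])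
  also have "\<dots> \<le> d u v + ennreal \<delta>" using lt by (rule add_left_mono)
  finally have "setdist d u A \<le> ennreal \<delta> + d u v" by (simp add: add.commute)
  thus ?thesis by (simp add: ennreal_minus_le_iff)
qed

definition "farN u \<delta> = rowt u \<union> {w. \<beta> w \<noteq> 0 \<and> ennreal \<delta> \<le> setdist d w A}"

lemma farN_props:
  assumes "\<delta> > 0"
  shows "finite (farN u \<delta>)" "rowt u \<subseteq> farN u \<delta>" "farN u \<delta> \<inter> A = {}"
    "{w. \<beta> w \<noteq> 0 \<and> ennreal \<delta> \<le> setdist d w A} \<subseteq> farN u \<delta>"
  using rowt_finite far_b[OF assms] rowt_sub bA by (auto simp: farN_def)

lemma escape_point:
  assumes pos: "rema u > 0" and \<delta>: "\<delta> > 0" and \<eta>: "\<eta> > 0"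
  shows "\<exists>n v. s (r n) (u, v) \<noteq> 0 \<and> setdist d u A - ennreal \<delta> \<le> d u v \<and> d u v \<le> W + ennreal \<eta>"
proof -
  have uA: "u \<notin> A" using rema_pos[OF pos] by simp
  note F = farN_props[OF \<delta>, of u]
  have "eventually (\<lambda>n. (\<Sum>v\<in>{v. s (r n) (u, v) \<noteq> 0} - farN u \<delta>. s (r n) (u, v)) = rema u \<and>
      Cost d p (s (r n)) \<le> W + ennreal \<eta>) sequentially"
    using escape[OF uA F(1,2,3)] ev_cost[OF \<eta>] by (rule eventually_conj)
  then obtain n where n1: "(\<Sum>v\<in>{v. s (r n) (u, v) \<noteq> 0} - farN u \<delta>. s (r n) (u, v)) = rema u"
    and n2: "Cost d p (s (r n)) \<le> W + ennreal \<eta>"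
    unfolding eventually_sequentially by blast
  have "{v. s (r n) (u, v) \<noteq> 0} - farN u \<delta> \<noteq> {}"
  proof
    assume h: "{v. s (r n) (u, v) \<noteq> 0} - farN u \<delta> = {}"
    have "rema u = 0" using n1 unfolding h by simp
    thus False using pos by simp
  qed
  then obtain v where v: "s (r n) (u, v) \<noteq> 0" "v \<notin> farN u \<delta>" by blast
  have "d u v \<le> Cost d p (s (r n))" using Cost_ge_point[OF p, of "s (r n)" "(u, v)"] v by simp
  hence "d u v \<le> W + ennreal \<eta>" using n2 by simp
  moreover have "setdist d u A - ennreal \<delta> \<le> d u v" by (rule esc_le[OF v F(4)])
  ultimately show ?thesis using v by blast
qed

lemma rema_le_W:
  assumes pos: "rema u > 0" shows "setdist d u A \<le> W"
proof (rule ennreal_le_epsilon)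
  fix e :: real assume e: "0 < e"
  obtain v where v: "setdist d u A - ennreal (e/2) \<le> d u v" "d u v \<le> W + ennreal (e/2)"
    using escape_point[OF pos, of "e/2" "e/2"] e by auto
  have "setdist d u A \<le> ennreal (e/2) + d u v" using v(1) by (simp add: ennreal_minus_le_iff)
  also have "\<dots> \<le> ennreal (e/2) + (W + ennreal (e/2))" using v(2) by (rule add_left_mono)
  also have "\<dots> = W + ennreal e" using e by (simp add: ennreal_plus[symmetric] add_ac del: ennreal_plus)
  finally show "setdist d u A \<le> W + ennreal e" .
qed

lemma rema_fin: "rema u > 0 \<Longrightarrow> setdist d u A < \<infinity>"
  using rema_le_W Wfin by (meson order_le_less_trans)

lemma row_bound:
  fixes g :: "ennreal \<Rightarrow> ennreal"
  assumes g: "mono g" and uA: "u \<notin> A" and \<delta>: "\<delta> > 0"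
  shows "eventually (\<lambda>n. of_nat (rema u) * g (setdist d u A - ennreal \<delta>) \<le>
     (\<Sum>v\<in>{v. s (r n) (u, v) \<noteq> 0} - farN u \<delta>. of_nat (s (r n) (u, v)) * g (d u v))) sequentially"
proof -
  note F = farN_props[OF \<delta>, of u]
  show ?thesis
  proof (rule eventually_mono[OF escape[OF uA F(1,2,3)]])
    fix n assume n: "(\<Sum>v\<in>{v. s (r n) (u, v) \<noteq> 0} - farN u \<delta>. s (r n) (u, v)) = rema u"
    define S where "S = {v. s (r n) (u, v) \<noteq> 0} - farN u \<delta>"
    have "of_nat (rema u) * g (setdist d u A - ennreal \<delta>) = (\<Sum>v\<in>S. of_nat (s (r n) (u, v)) * g (setdist d u A - ennreal \<delta>))"
      by (simp only: S_def n[symmetric] of_nat_sum sum_distrib_right)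
    also have "\<dots> \<le> (\<Sum>v\<in>S. of_nat (s (r n) (u, v)) * g (d u v))"
    proof (rule sum_mono)
      fix v assume "v \<in> S"
      hence "setdist d u A - ennreal \<delta> \<le> d u v" using esc_le[OF _ _ F(4)] by (auto simp: S_def)
      hence "g (setdist d u A - ennreal \<delta>) \<le> g (d u v)" by (rule monoD[OF g])
      thus "of_nat (s (r n) (u, v)) * g (setdist d u A - ennreal \<delta>) \<le> of_nat (s (r n) (u, v)) * g (d u v)"
        by (rule mult_left_mono) simp
    qed
    finally show "of_nat (rema u) * g (setdist d u A - ennreal \<delta>) \<le>
      (\<Sum>v\<in>{v. s (r n) (u, v) \<noteq> 0} - farN u \<delta>. of_nat (s (r n) (u, v)) * g (d u v))"
      by (simp add: S_def)
  qed
qed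

end


lemma d_sym: "emetric d \<Longrightarrow> d x y = d y x"
  unfolding emetric_def by blast

lemma mok_swap: "mok A \<alpha> \<beta> \<sigma> \<Longrightarrow> mok A \<beta> \<alpha> (\<lambda>q. \<sigma> (prod.swap q))"
proof -
  assume m: "mok A \<alpha> \<beta> \<sigma>"
  have c: "{q. \<sigma> (prod.swap q) \<noteq> 0} = prod.swap ` {q. \<sigma> q \<noteq> 0}"
    by (auto simp: image_iff)
  show ?thesis unfolding mok_def
    using mok_AA[OF m] mok_row[OF m] mok_col[OF m] mok_cnt[OF m] c by auto
qed

lemma Cost_swap:
  assumes em: "emetric d"
  shows "Cost d p (\<lambda>q. \<sigma> (prod.swap q)) = Cost d p \<sigma>"
proof -
  have c: "{q. \<sigma> (prod.swap q) \<noteq> 0} = prod.swap ` {q. \<sigma> q \<noteq> 0}"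
    by (auto simp: image_iff)
  have 1: "(SUP q\<in>{q. \<sigma> (prod.swap q) \<noteq> 0}. d (fst q) (snd q)) = (SUP q\<in>{q. \<sigma> q \<noteq> 0}. d (fst q) (snd q))"
    unfolding c image_image using d_sym[OF em] by (simp add: case_prod_beta)
  have 2: "(\<integral>\<^sup>+ q. of_nat (\<sigma> (prod.swap q)) * enn_powr (d (fst q) (snd q)) t \<partial>count_space UNIV)
      = (\<integral>\<^sup>+ q. of_nat (\<sigma> q) * enn_powr (d (fst q) (snd q)) t \<partial>count_space UNIV)" for t
  proof -
    have "(\<integral>\<^sup>+ q. of_nat (\<sigma> (prod.swap q)) * enn_powr (d (fst q) (snd q)) t \<partial>count_space UNIV)
      = (\<integral>\<^sup>+ q. (\<lambda>q. of_nat (\<sigma> q) * enn_powr (d (fst q) (snd q)) t) (prod.swap q) \<partial>count_space UNIV)"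
      using d_sym[OF em] by (intro nn_integral_cong) (simp add: fst_swap snd_swap)
    also have "\<dots> = (\<integral>\<^sup>+ q. of_nat (\<sigma> q) * enn_powr (d (fst q) (snd q)) t \<partial>count_space UNIV)"
      by (rule nn_integral_bij_count_space) simp
    finally show ?thesis .
  qed
  show ?thesis unfolding Cost_def using 1 2 by simp
qed

lemma (in lim_setup) lim_setup_swap: "lim_setup d A \<beta> \<alpha> (\<lambda>n q. s n (prod.swap q)) p W"
  unfolding lim_setup_def
  using em dm a b far_a far_b mok_swap[OF ms] p Wfin cs Cost_swap[OF em] by auto

lemma (in lim2) lim2_swap: "lim2 d A \<beta> \<alpha> (\<lambda>n q. s n (prod.swap q)) p W r (\<lambda>q. \<tau> (prod.swap q))"
  unfolding lim2_def lim2_axioms_def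
  using lim_setup_swap r \<tau>0 \<tau>lim by auto

locale lim3 = lim2 + T: lim2 d A \<beta> \<alpha> "\<lambda>n q. s n (prod.swap q)" p W r "\<lambda>q. \<tau> (prod.swap q)"
begin

definition "nn x = (SOME a. a \<in> A \<and> d x a = setdist d x A)"

lemma nn_prop: assumes "setdist d x A < \<infinity>" shows "nn x \<in> A \<and> d x (nn x) = setdist d x A"
proof -
  have "\<exists>a\<in>A. setdist d x A = d x a" using dm assms unfolding dist_minimizing_def by blast
  hence "\<exists>a. a \<in> A \<and> d x a = setdist d x A" by auto
  thus ?thesis unfolding nn_def by (rule someI_ex)
qed

lemma Trowt: "T.rowt v = {u. \<tau> (u, v) \<noteq> 0}" by (simp add: T.rowt_def)
lemma Trema: "T.rema v = \<beta> v - (\<Sum>u\<in>{u. \<tau> (u, v) \<noteq> 0}. \<tau> (u, v))" by (simp add: T.rema_def Trowt)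

definition "sig q = (if fst q \<notin> A \<and> snd q \<notin> A then \<tau> q else 0)
   + (if fst q \<notin> A \<and> snd q = nn (fst q) then rema (fst q) else 0)
   + (if snd q \<notin> A \<and> fst q = nn (snd q) then T.rema (snd q) else 0)"

lemma rema_nn: "rema u > 0 \<Longrightarrow> nn u \<in> A \<and> d u (nn u) = setdist d u A"
  using nn_prop rema_fin by blast
lemma Trema_nn: "T.rema v > 0 \<Longrightarrow> nn v \<in> A \<and> d v (nn v) = setdist d v A"
  using nn_prop T.rema_fin by blast

lemma sig_row: assumes "u \<notin> A" shows "sig (u, v) = \<tau> (u, v) + (if v = nn u then rema u else 0)"
proof -
  have 1: "(if u \<notin> A \<and> v \<notin> A then \<tau> (u, v) else 0) = \<tau> (u, v)" using \<tau>_nz[of u v] assms by auto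
  have 3: "(if v \<notin> A \<and> u = nn v then T.rema v else 0) = 0" using Trema_nn[of v] assms by auto
  have 2: "(if u \<notin> A \<and> v = nn u then rema u else 0) = (if v = nn u then rema u else 0)" using assms by simp
  have "sig (u, v) = (if u \<notin> A \<and> v \<notin> A then \<tau> (u, v) else 0) + (if u \<notin> A \<and> v = nn u then rema u else 0)
     + (if v \<notin> A \<and> u = nn v then T.rema v else 0)" by (simp only: sig_def fst_conv snd_conv)
  also have "\<dots> = \<tau> (u, v) + (if v = nn u then rema u else 0)" by (simp only: 1 2 3 add_0_right)
  finally show ?thesis .
qed

lemma sig_col: assumes "v \<notin> A" shows "sig (u, v) = \<tau> (u, v) + (if u = nn v then T.rema v else 0)"
proof -
  have 1: "(if u \<notin> A \<and> v \<notin> A then \<tau> (u, v) else 0) = \<tau> (u, v)" using \<tau>_nz[of u v] assms by auto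
  have 2: "(if u \<notin> A \<and> v = nn u then rema u else 0) = 0" using rema_nn[of u] assms by auto
  have 3: "(if v \<notin> A \<and> u = nn v then T.rema v else 0) = (if u = nn v then T.rema v else 0)" using assms by simp
  have "sig (u, v) = (if u \<notin> A \<and> v \<notin> A then \<tau> (u, v) else 0) + (if u \<notin> A \<and> v = nn u then rema u else 0)
     + (if v \<notin> A \<and> u = nn v then T.rema v else 0)" by (simp only: sig_def fst_conv snd_conv)
  also have "\<dots> = \<tau> (u, v) + (if u = nn v then T.rema v else 0)" by (simp only: 1 2 3 add_0_right add_0)
  finally show ?thesis .
qed

lemma sig_row_ok:
  assumes uA: "u \<notin> A"
  shows "finite {v. sig (u, v) \<noteq> 0} \<and> (\<Sum>v\<in>{v. sig (u, v) \<noteq> 0}. sig (u, v)) = \<alpha> u"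
proof -
  define R where "R = rowt u \<union> {nn u}"
  have fR: "finite R" using rowt_finite by (simp add: R_def)
  have sub: "{v. sig (u, v) \<noteq> 0} \<subseteq> R" using sig_row[OF uA] by (auto simp: R_def rowt_def split: if_splits)
  have "(\<Sum>v\<in>R. sig (u, v)) = (\<Sum>v\<in>R. \<tau> (u, v)) + (\<Sum>v\<in>R. (if v = nn u then rema u else 0))"
    by (simp add: sig_row[OF uA] sum.distrib)
  also have "(\<Sum>v\<in>R. \<tau> (u, v)) = (\<Sum>v\<in>rowt u. \<tau> (u, v))"
    using fR by (intro sum.mono_neutral_right) (auto simp: R_def rowt_def)
  also have "(\<Sum>v\<in>R. (if v = nn u then rema u else 0)) = rema u"
    using fR by (simp add: R_def)
  also have "(\<Sum>v\<in>rowt u. \<tau> (u, v)) + rema u = \<alpha> u"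
    using rowt_le[of u] by (simp add: rema_def)
  finally have "(\<Sum>v\<in>R. sig (u, v)) = \<alpha> u" .
  thus ?thesis using sum_supp_eq[OF fR sub] finite_subset[OF sub fR] by simp
qed

lemma sig_col_ok:
  assumes vA: "v \<notin> A"
  shows "finite {u. sig (u, v) \<noteq> 0} \<and> (\<Sum>u\<in>{u. sig (u, v) \<noteq> 0}. sig (u, v)) = \<beta> v"
proof -
  define R where "R = T.rowt v \<union> {nn v}"
  have fR: "finite R" using T.rowt_finite by (simp add: R_def)
  have sub: "{u. sig (u, v) \<noteq> 0} \<subseteq> R" using sig_col[OF vA] by (auto simp: R_def Trowt split: if_splits)
  have "(\<Sum>u\<in>R. sig (u, v)) = (\<Sum>u\<in>R. \<tau> (u, v)) + (\<Sum>u\<in>R. (if u = nn v then T.rema v else 0))"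
    by (simp add: sig_col[OF vA] sum.distrib)
  also have "(\<Sum>u\<in>R. \<tau> (u, v)) = (\<Sum>u\<in>T.rowt v. \<tau> (u, v))"
    using fR by (intro sum.mono_neutral_right) (auto simp: R_def Trowt)
  also have "(\<Sum>u\<in>R. (if u = nn v then T.rema v else 0)) = T.rema v"
    using fR by (simp add: R_def)
  also have "(\<Sum>u\<in>T.rowt v. \<tau> (u, v)) + T.rema v = \<beta> v"
    using T.rowt_le[of v] by (simp add: T.rema_def)
  finally have "(\<Sum>u\<in>R. sig (u, v)) = \<beta> v" .
  thus ?thesis using sum_supp_eq[of R "\<lambda>u. sig (u, v)"] fR sub finite_subset[OF sub fR] by simp
qed

lemma sig_cnt: "countable {q. sig q \<noteq> 0}"
proof (rule countable_subset)
  show "{q. sig q \<noteq> 0} \<subseteq> ({u. \<alpha> u \<noteq> 0} \<times> {v. \<beta> v \<noteq> 0}) \<union> (\<lambda>u. (u, nn u)) ` {u. \<alpha> u \<noteq> 0} \<union> (\<lambda>v. (nn v, v)) ` {v. \<beta> v \<noteq> 0}"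
  proof
    fix q assume q: "q \<in> {q. sig q \<noteq> 0}"
    obtain u v where uv: "q = (u, v)" by (cases q)
    have "\<tau> (u, v) \<noteq> 0 \<or> (u \<notin> A \<and> v = nn u \<and> rema u \<noteq> 0) \<or> (v \<notin> A \<and> u = nn v \<and> T.rema v \<noteq> 0)"
      using q uv by (auto simp: sig_def split: if_splits)
    moreover have "rema u \<noteq> 0 \<Longrightarrow> \<alpha> u \<noteq> 0" using rema_pos[of u] by simp
    moreover have "T.rema v \<noteq> 0 \<Longrightarrow> \<beta> v \<noteq> 0" using T.rema_pos[of v] by simp
    ultimately show "q \<in> ({u. \<alpha> u \<noteq> 0} \<times> {v. \<beta> v \<noteq> 0}) \<union> (\<lambda>u. (u, nn u)) ` {u. \<alpha> u \<noteq> 0} \<union> (\<lambda>v. (nn v, v)) ` {v. \<beta> v \<noteq> 0}"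
      using uv \<tau>_nz[of u v] by auto
  qed
  show "countable (({u. \<alpha> u \<noteq> 0} \<times> {v. \<beta> v \<noteq> 0}) \<union> (\<lambda>u. (u, nn u)) ` {u. \<alpha> u \<noteq> 0} \<union> (\<lambda>v. (nn v, v)) ` {v. \<beta> v \<noteq> 0})"
    using a b by (simp add: dgm_def)
qed

lemma sig_mok: "mok A \<alpha> \<beta> sig"
  unfolding mok_def using sig_row_ok sig_col_ok sig_cnt by (simp add: sig_def)

end


context lim2 begin

lemma row_bound_gen:
  fixes g :: "ennreal \<Rightarrow> ennreal"
  assumes g: "mono g" and uA: "u \<notin> A" and fN: "finite N" and sub: "rowt u \<subseteq> N" and NA: "N \<inter> A = {}"
    and far: "{w. \<beta> w \<noteq> 0 \<and> ennreal \<delta> \<le> setdist d w A} \<subseteq> N"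
  shows "eventually (\<lambda>n. of_nat (rema u) * g (setdist d u A - ennreal \<delta>) \<le>
     (\<Sum>v\<in>{v. s (r n) (u, v) \<noteq> 0} - N. of_nat (s (r n) (u, v)) * g (d u v))) sequentially"
proof (rule eventually_mono[OF escape[OF uA fN sub NA]])
  fix n assume n: "(\<Sum>v\<in>{v. s (r n) (u, v) \<noteq> 0} - N. s (r n) (u, v)) = rema u"
  define S where "S = {v. s (r n) (u, v) \<noteq> 0} - N"
  have "of_nat (rema u) * g (setdist d u A - ennreal \<delta>) = (\<Sum>v\<in>S. of_nat (s (r n) (u, v)) * g (setdist d u A - ennreal \<delta>))"
    by (simp only: S_def n[symmetric] of_nat_sum sum_distrib_right)
  also have "\<dots> \<le> (\<Sum>v\<in>S. of_nat (s (r n) (u, v)) * g (d u v))"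
  proof (rule sum_mono)
    fix v assume "v \<in> S"
    hence "setdist d u A - ennreal \<delta> \<le> d u v" using esc_le[OF _ _ far] by (auto simp: S_def)
    hence "g (setdist d u A - ennreal \<delta>) \<le> g (d u v)" by (rule monoD[OF g])
    thus "of_nat (s (r n) (u, v)) * g (setdist d u A - ennreal \<delta>) \<le> of_nat (s (r n) (u, v)) * g (d u v)"
      by (rule mult_left_mono) simp
  qed
  finally show "of_nat (rema u) * g (setdist d u A - ennreal \<delta>) \<le>
      (\<Sum>v\<in>{v. s (r n) (u, v) \<noteq> 0} - N. of_nat (s (r n) (u, v)) * g (d u v))"
    by (simp add: S_def)
qed

lemma tau_point_le:
  assumes "\<tau> (u, v) \<noteq> 0" shows "d u v \<le> W"
proof (rule ennreal_le_epsilon)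
  fix e :: real assume e: "0 < e"
  have uv: "u \<notin> A" "v \<notin> A" using \<tau>_nz[OF assms] by auto
  have "eventually (\<lambda>n. s (r n) (u, v) = \<tau> (u, v) \<and> Cost d p (s (r n)) \<le> W + ennreal e) sequentially"
    using \<tau>lim[of "(u, v)"] uv ev_cost[OF e] by (auto intro: eventually_conj)
  then obtain n where n: "s (r n) (u, v) = \<tau> (u, v)" "Cost d p (s (r n)) \<le> W + ennreal e"
    unfolding eventually_sequentially by blast
  have "d u v \<le> Cost d p (s (r n))" using Cost_ge_point[OF p, of "s (r n)" "(u, v)"] n(1) assms by simp
  thus "d u v \<le> W + ennreal e" using n(2) by simp
qed

end

context lim3 begin

lemma sig_point_le:
  assumes "sig (u, v) \<noteq> 0" shows "d u v \<le> W"
proof -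
  have "\<tau> (u, v) \<noteq> 0 \<or> (u \<notin> A \<and> v = nn u \<and> rema u \<noteq> 0) \<or> (v \<notin> A \<and> u = nn v \<and> T.rema v \<noteq> 0)"
    using assms by (auto simp: sig_def split: if_splits)
  thus ?thesis
  proof (elim disjE conjE)
    assume "\<tau> (u, v) \<noteq> 0" thus ?thesis by (rule tau_point_le)
  next
    assume h: "u \<notin> A" "v = nn u" "rema u \<noteq> 0"
    hence "d u v = setdist d u A" using rema_nn[of u] by simp
    thus ?thesis using rema_le_W[of u] h by simp
  next
    assume h: "v \<notin> A" "u = nn v" "T.rema v \<noteq> 0"
    hence "d v u = setdist d v A" using Trema_nn[of v] by simp
    moreover have "d u v = d v u" by (rule d_sym[OF em])
    ultimately show ?thesis using T.rema_le_W[of v] h by simp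
  qed
qed

lemma Cost_sig_inf: "p = \<infinity> \<Longrightarrow> Cost d p sig \<le> W"
  unfolding Cost_def using sig_point_le by (auto intro!: SUP_least)

end


context lim3 begin

lemma key_bound:
  fixes g :: "ennreal \<Rightarrow> ennreal"
  assumes pf: "p \<noteq> \<infinity>" and fE0: "finite E0" and E0: "E0 \<subseteq> {q. \<tau> q \<noteq> 0}"
    and fU: "finite U" and UA: "U \<inter> A = {}" and fV: "finite V" and VA: "V \<inter> A = {}"
    and \<delta>: "\<delta> > 0" and \<eta>: "\<eta> > 0"
    and g_def: "g = (\<lambda>t. enn_powr t (enn2real p))"
  shows "(\<Sum>q\<in>E0. of_nat (\<tau> q) * g (d (fst q) (snd q))) + (\<Sum>u\<in>U. of_nat (rema u) * g (setdist d u A - ennreal \<delta>))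
     + (\<Sum>v\<in>V. of_nat (T.rema v) * g (setdist d v A - ennreal \<delta>)) \<le> g (W + ennreal \<eta>)"
proof -
  have gm: "mono g" unfolding g_def by (auto intro!: monoI enn_powr_mono)
  have E0A: "fst q \<notin> A \<and> snd q \<notin> A" if "q \<in> E0" for q
    using that E0 \<tau>_nz[of "fst q" "snd q"] by auto
  define N where "N = snd ` E0 \<union> V \<union> (\<Union>u\<in>U. rowt u) \<union> {w. \<beta> w \<noteq> 0 \<and> ennreal \<delta> \<le> setdist d w A}"
  define M where "M = fst ` E0 \<union> U \<union> (\<Union>v\<in>V. T.rowt v) \<union> {w. \<alpha> w \<noteq> 0 \<and> ennreal \<delta> \<le> setdist d w A}"
  have fN: "finite N" unfolding N_def using fE0 fV fU rowt_finite far_b[OF \<delta>] by auto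
  have fM: "finite M" unfolding M_def using fE0 fV fU T.rowt_finite far_a[OF \<delta>] by auto
  have NA: "N \<inter> A = {}" unfolding N_def using E0A VA rowt_sub bA by fastforce
  have MA: "M \<inter> A = {}" unfolding M_def using E0A UA T.rowt_sub aA by fastforce
  have ev1: "eventually (\<lambda>n. \<forall>q\<in>E0. s (r n) q = \<tau> q) sequentially"
    using fE0 E0A by (intro ev_fin) auto
  have ev2: "eventually (\<lambda>n. \<forall>u\<in>U. of_nat (rema u) * g (setdist d u A - ennreal \<delta>) \<le>
     (\<Sum>v\<in>{v. s (r n) (u, v) \<noteq> 0} - N. of_nat (s (r n) (u, v)) * g (d u v))) sequentially"
  proof (rule eventually_ball_finite[OF fU], rule ballI)
    fix u assume u: "u \<in> U"
    show "eventually (\<lambda>n. of_nat (rema u) * g (setdist d u A - ennreal \<delta>) \<le>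
     (\<Sum>v\<in>{v. s (r n) (u, v) \<noteq> 0} - N. of_nat (s (r n) (u, v)) * g (d u v))) sequentially"
      by (rule row_bound_gen[OF gm _ fN _ NA]) (use u UA in \<open>auto simp: N_def\<close>)
  qed
  have ev3: "eventually (\<lambda>n. \<forall>v\<in>V. of_nat (T.rema v) * g (setdist d v A - ennreal \<delta>) \<le>
     (\<Sum>u\<in>{u. s (r n) (u, v) \<noteq> 0} - M. of_nat (s (r n) (u, v)) * g (d v u))) sequentially"
  proof (rule eventually_ball_finite[OF fV], rule ballI)
    fix v assume v: "v \<in> V"
    have "eventually (\<lambda>n. of_nat (T.rema v) * g (setdist d v A - ennreal \<delta>) \<le>
     (\<Sum>u\<in>{u. (\<lambda>n q. s n (prod.swap q)) (r n) (v, u) \<noteq> 0} - M. of_nat ((\<lambda>n q. s n (prod.swap q)) (r n) (v, u)) * g (d v u))) sequentially"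
      by (rule T.row_bound_gen[OF gm _ fM _ MA]) (use v VA in \<open>auto simp: M_def\<close>)
    thus "eventually (\<lambda>n. of_nat (T.rema v) * g (setdist d v A - ennreal \<delta>) \<le>
     (\<Sum>u\<in>{u. s (r n) (u, v) \<noteq> 0} - M. of_nat (s (r n) (u, v)) * g (d v u))) sequentially"
      by simp
  qed
  have "eventually (\<lambda>n. (\<forall>q\<in>E0. s (r n) q = \<tau> q) \<and> (\<forall>u\<in>U. of_nat (rema u) * g (setdist d u A - ennreal \<delta>) \<le>
     (\<Sum>v\<in>{v. s (r n) (u, v) \<noteq> 0} - N. of_nat (s (r n) (u, v)) * g (d u v))) \<and>
     (\<forall>v\<in>V. of_nat (T.rema v) * g (setdist d v A - ennreal \<delta>) \<le>
     (\<Sum>u\<in>{u. s (r n) (u, v) \<noteq> 0} - M. of_nat (s (r n) (u, v)) * g (d v u))) \<and>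
     Cost d p (s (r n)) \<le> W + ennreal \<eta>) sequentially"
    using ev1 ev2 ev3 ev_cost[OF \<eta>] by (intro eventually_conj)
  then obtain n where n1: "\<forall>q\<in>E0. s (r n) q = \<tau> q"
    and n2: "\<forall>u\<in>U. of_nat (rema u) * g (setdist d u A - ennreal \<delta>) \<le>
     (\<Sum>v\<in>{v. s (r n) (u, v) \<noteq> 0} - N. of_nat (s (r n) (u, v)) * g (d u v))"
    and n3: "\<forall>v\<in>V. of_nat (T.rema v) * g (setdist d v A - ennreal \<delta>) \<le>
     (\<Sum>u\<in>{u. s (r n) (u, v) \<noteq> 0} - M. of_nat (s (r n) (u, v)) * g (d v u))"
    and n4: "Cost d p (s (r n)) \<le> W + ennreal \<eta>"
    unfolding eventually_sequentially by blast
  define f where "f q = of_nat (s (r n) q) * g (d (fst q) (snd q))" for q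
  define B where "B u = {v. s (r n) (u, v) \<noteq> 0} - N" for u
  define C where "C v = {u. s (r n) (u, v) \<noteq> 0} - M" for v
  have fB: "finite (B u)" if "u \<in> U" for u
    using mok_row[OF ms, of u "r n"] that UA by (auto simp: B_def)
  have fC: "finite (C v)" if "v \<in> V" for v
    using mok_col[OF ms, of v "r n"] that VA by (auto simp: C_def)
  define Q2 where "Q2 = Sigma U B"
  define Q3 where "Q3 = prod.swap ` Sigma V C"
  have fQ2: "finite Q2" unfolding Q2_def using fU fB by auto
  have fQ3: "finite Q3" unfolding Q3_def using fV fC by auto
  have s1: "(\<Sum>q\<in>E0. of_nat (\<tau> q) * g (d (fst q) (snd q))) = (\<Sum>q\<in>E0. f q)"
    using n1 by (auto simp: f_def intro!: sum.cong)
  have s2: "(\<Sum>u\<in>U. of_nat (rema u) * g (setdist d u A - ennreal \<delta>)) \<le> (\<Sum>q\<in>Q2. f q)"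
  proof -
    have "(\<Sum>u\<in>U. of_nat (rema u) * g (setdist d u A - ennreal \<delta>)) \<le> (\<Sum>u\<in>U. \<Sum>v\<in>B u. f (u, v))"
      using n2 by (intro sum_mono) (auto simp: B_def f_def)
    also have "\<dots> = (\<Sum>q\<in>Q2. f q)" unfolding Q2_def using fU fB
      by (subst sum.Sigma) (auto simp: case_prod_beta')
    finally show ?thesis .
  qed
  have s3: "(\<Sum>v\<in>V. of_nat (T.rema v) * g (setdist d v A - ennreal \<delta>)) \<le> (\<Sum>q\<in>Q3. f q)"
  proof -
    have "(\<Sum>v\<in>V. of_nat (T.rema v) * g (setdist d v A - ennreal \<delta>)) \<le> (\<Sum>v\<in>V. \<Sum>u\<in>C v. f (u, v))"
      using n3 d_sym[OF em] by (intro sum_mono) (auto simp: C_def f_def)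
    also have "\<dots> = (\<Sum>q\<in>Sigma V C. f (prod.swap q))" using fV fC
      by (subst sum.Sigma) (auto simp: case_prod_beta' prod.swap_def)
    also have "\<dots> = (\<Sum>q\<in>Q3. f q)" unfolding Q3_def
      by (subst sum.reindex) (auto simp: o_def)
    finally show ?thesis .
  qed
  have d12: "E0 \<inter> Q2 = {}" unfolding Q2_def B_def N_def by force
  have d13: "(E0 \<union> Q2) \<inter> Q3 = {}" unfolding Q2_def Q3_def C_def M_def B_def by force
  have "(\<Sum>q\<in>E0. of_nat (\<tau> q) * g (d (fst q) (snd q))) + (\<Sum>u\<in>U. of_nat (rema u) * g (setdist d u A - ennreal \<delta>))
     + (\<Sum>v\<in>V. of_nat (T.rema v) * g (setdist d v A - ennreal \<delta>)) \<le> (\<Sum>q\<in>E0. f q) + (\<Sum>q\<in>Q2. f q) + (\<Sum>q\<in>Q3. f q)"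
    using s1 s2 s3 by (intro add_mono) auto
  also have "\<dots> = (\<Sum>q\<in>E0 \<union> Q2 \<union> Q3. f q)"
    using fE0 fQ2 fQ3 d12 d13 by (simp add: sum.union_disjoint)
  also have "\<dots> \<le> (\<integral>\<^sup>+ q. f q \<partial>count_space UNIV)"
    by (rule finite_sum_le_nn) (use fE0 fQ2 fQ3 in auto)
  also have "\<dots> \<le> g (W + ennreal \<eta>)"
    using n4 Cost_le_iff[OF p pf, of d "s (r n)" "W + ennreal \<eta>"] by (simp add: f_def g_def)
  finally show ?thesis .
qed

end


context lim3 begin

lemma X0_bound:
  fixes g :: "ennreal \<Rightarrow> ennreal"
  assumes pf: "p \<noteq> \<infinity>" and fE0: "finite E0" and E0: "E0 \<subseteq> {q. \<tau> q \<noteq> 0}"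
    and fU: "finite U" and UA: "U \<inter> A = {}" and fV: "finite V" and VA: "V \<inter> A = {}"
    and \<eta>: "\<eta> > 0"
    and g_def: "g = (\<lambda>t. enn_powr t (enn2real p))"
  shows "(\<Sum>q\<in>E0. of_nat (\<tau> q) * g (d (fst q) (snd q))) + (\<Sum>u\<in>U. of_nat (rema u) * g (setdist d u A))
     + (\<Sum>v\<in>V. of_nat (T.rema v) * g (setdist d v A)) \<le> g (W + ennreal \<eta>)"
proof -
  have rp: "enn2real p > 0" using p pf by (cases p) (auto simp flip: ennreal_1 simp: ennreal_le_iff)
  define X where "X k = (\<Sum>q\<in>E0. of_nat (\<tau> q) * g (d (fst q) (snd q))) + (\<Sum>u\<in>U. of_nat (rema u) * g (setdist d u A - ennreal (1 / Suc k)))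
     + (\<Sum>v\<in>V. of_nat (T.rema v) * g (setdist d v A - ennreal (1 / Suc k)))" for k :: nat
  have c: "(\<lambda>k::nat. g (t - ennreal (1 / Suc k))) \<longlonglongrightarrow> g t" for t
    unfolding g_def by (rule enn_powr_cont[OF rp])
  have "X \<longlonglongrightarrow> (\<Sum>q\<in>E0. of_nat (\<tau> q) * g (d (fst q) (snd q))) + (\<Sum>u\<in>U. of_nat (rema u) * g (setdist d u A))
     + (\<Sum>v\<in>V. of_nat (T.rema v) * g (setdist d v A))"
    unfolding X_def
    by (intro tendsto_add tendsto_const tendsto_sum ennreal_tendsto_cmult c) (auto simp: of_nat_less_top)
  moreover have "X k \<le> g (W + ennreal \<eta>)" for k
    unfolding X_def by (rule key_bound[OF pf fE0 E0 fU UA fV VA _ \<eta> g_def]) simp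
  ultimately show ?thesis by (intro LIMSEQ_le_const2) auto
qed

lemma finite_E_bound:
  fixes g :: "ennreal \<Rightarrow> ennreal"
  assumes pf: "p \<noteq> \<infinity>" and fE: "finite E" and \<eta>: "\<eta> > 0"
    and g_def: "g = (\<lambda>t. enn_powr t (enn2real p))"
  shows "(\<Sum>q\<in>E. of_nat (sig q) * g (d (fst q) (snd q))) \<le> g (W + ennreal \<eta>)"
proof -
  define t1 where "t1 q = (if fst q \<notin> A \<and> snd q \<notin> A then \<tau> q else 0)" for q
  define t2 where "t2 q = (if fst q \<notin> A \<and> snd q = nn (fst q) then rema (fst q) else 0)" for q
  define t3 where "t3 q = (if snd q \<notin> A \<and> fst q = nn (snd q) then T.rema (snd q) else 0)" for q
  define G where "G q = g (d (fst q) (snd q))" for q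
  define E0 where "E0 = {q\<in>E. \<tau> q \<noteq> 0}"
  define E2 where "E2 = {q\<in>E. fst q \<notin> A \<and> snd q = nn (fst q) \<and> rema (fst q) \<noteq> 0}"
  define E3 where "E3 = {q\<in>E. snd q \<notin> A \<and> fst q = nn (snd q) \<and> T.rema (snd q) \<noteq> 0}"
  have sig_eq: "sig q = t1 q + t2 q + t3 q" for q unfolding sig_def t1_def t2_def t3_def by simp
  have "(\<Sum>q\<in>E. of_nat (sig q) * G q) = (\<Sum>q\<in>E. of_nat (t1 q) * G q) + (\<Sum>q\<in>E. of_nat (t2 q) * G q) + (\<Sum>q\<in>E. of_nat (t3 q) * G q)"
    by (simp add: sig_eq distrib_right sum.distrib)
  also have "(\<Sum>q\<in>E. of_nat (t1 q) * G q) \<le> (\<Sum>q\<in>E0. of_nat (\<tau> q) * G q)"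
  proof -
    have "(\<Sum>q\<in>E. of_nat (t1 q) * G q) \<le> (\<Sum>q\<in>E. of_nat (\<tau> q) * G q)"
      by (intro sum_mono mult_right_mono) (auto simp: t1_def)
    also have "\<dots> = (\<Sum>q\<in>E0. of_nat (\<tau> q) * G q)"
      using fE by (intro sum.mono_neutral_right) (auto simp: E0_def)
    finally show ?thesis .
  qed
  also have "(\<Sum>q\<in>E. of_nat (t2 q) * G q) = (\<Sum>u\<in>fst ` E2. of_nat (rema u) * g (setdist d u A))"
  proof -
    have "(\<Sum>q\<in>E. of_nat (t2 q) * G q) = (\<Sum>q\<in>E2. of_nat (t2 q) * G q)"
      using fE by (intro sum.mono_neutral_right) (auto simp: E2_def t2_def)
    also have "\<dots> = (\<Sum>q\<in>E2. (\<lambda>u. of_nat (rema u) * g (setdist d u A)) (fst q))"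
    proof (rule sum.cong)
      fix q assume q: "q \<in> E2"
      hence "d (fst q) (snd q) = setdist d (fst q) A" using rema_nn[of "fst q"] by (auto simp: E2_def)
      thus "of_nat (t2 q) * G q = (\<lambda>u. of_nat (rema u) * g (setdist d u A)) (fst q)"
        using q by (simp add: E2_def t2_def G_def)
    qed simp
    also have "\<dots> = (\<Sum>u\<in>fst ` E2. of_nat (rema u) * g (setdist d u A))"
    proof (rule sum.reindex[symmetric, unfolded o_def])
      show "inj_on fst E2" by (auto simp: inj_on_def E2_def prod_eq_iff)
    qed
    finally show ?thesis .
  qed
  also have "(\<Sum>q\<in>E. of_nat (t3 q) * G q) = (\<Sum>v\<in>snd ` E3. of_nat (T.rema v) * g (setdist d v A))"
  proof -
    have "(\<Sum>q\<in>E. of_nat (t3 q) * G q) = (\<Sum>q\<in>E3. of_nat (t3 q) * G q)"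
      using fE by (intro sum.mono_neutral_right) (auto simp: E3_def t3_def)
    also have "\<dots> = (\<Sum>q\<in>E3. (\<lambda>v. of_nat (T.rema v) * g (setdist d v A)) (snd q))"
    proof (rule sum.cong)
      fix q assume q: "q \<in> E3"
      hence "d (snd q) (fst q) = setdist d (snd q) A" using Trema_nn[of "snd q"] by (auto simp: E3_def)
      hence "d (fst q) (snd q) = setdist d (snd q) A" using d_sym[OF em] by metis
      thus "of_nat (t3 q) * G q = (\<lambda>v. of_nat (T.rema v) * g (setdist d v A)) (snd q)"
        using q by (simp add: E3_def t3_def G_def)
    qed simp
    also have "\<dots> = (\<Sum>v\<in>snd ` E3. of_nat (T.rema v) * g (setdist d v A))"
    proof (rule sum.reindex[symmetric, unfolded o_def])
      show "inj_on snd E3" by (auto simp: inj_on_def E3_def prod_eq_iff)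
    qed
    finally show ?thesis .
  qed
  also have "(\<Sum>q\<in>E0. of_nat (\<tau> q) * G q) + (\<Sum>u\<in>fst ` E2. of_nat (rema u) * g (setdist d u A))
     + (\<Sum>v\<in>snd ` E3. of_nat (T.rema v) * g (setdist d v A)) \<le> g (W + ennreal \<eta>)"
    unfolding G_def
    by (rule X0_bound[OF pf _ _ _ _ _ _ \<eta> g_def]) (use fE in \<open>auto simp: E0_def E2_def E3_def\<close>)
  finally show ?thesis by (simp add: G_def add_mono)
qed

lemma Cost_sig_fin:
  assumes pf: "p \<noteq> \<infinity>" shows "Cost d p sig \<le> W"
proof (rule ennreal_le_epsilon)
  fix \<eta> :: real assume \<eta>: "0 < \<eta>"
  define g where "g = (\<lambda>t. enn_powr t (enn2real p))"
  have "(\<integral>\<^sup>+ q. of_nat (sig q) * g (d (fst q) (snd q)) \<partial>count_space UNIV) \<le> g (W + ennreal \<eta>)"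
  proof (rule nn_le_from_finite_sums)
    show "countable {q. of_nat (sig q) * g (d (fst q) (snd q)) \<noteq> 0}"
      by (rule countable_subset[OF _ sig_cnt]) auto
    fix E :: "('a \<times> 'a) set" assume "finite E"
    thus "(\<Sum>q\<in>E. of_nat (sig q) * g (d (fst q) (snd q))) \<le> g (W + ennreal \<eta>)"
      by (rule finite_E_bound[OF pf _ \<eta> g_def])
  qed
  thus "Cost d p sig \<le> W + ennreal \<eta>" using Cost_le_iff[OF p pf, of d sig "W + ennreal \<eta>"] by (simp add: g_def)
qed

lemma Cost_sig: "Cost d p sig \<le> W"
  using Cost_sig_fin Cost_sig_inf by blast

end


context lim_setup begin

lemma exists_good: "\<exists>\<sigma>. mok A \<alpha> \<beta> \<sigma> \<and> Cost d p \<sigma> \<le> W"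
proof -
  obtain r \<tau> where h: "strict_mono r" "\<forall>q. \<alpha> (fst q) = 0 \<or> \<beta> (snd q) = 0 \<longrightarrow> \<tau> q = 0"
     "\<forall>q. fst q \<notin> A \<longrightarrow> snd q \<notin> A \<longrightarrow> eventually (\<lambda>n. s (r n) q = \<tau> q) sequentially"
    using subseq_exists by blast
  have l2: "lim2 d A \<alpha> \<beta> s p W r \<tau>"
    unfolding lim2_def lim2_axioms_def using lim_setup_axioms h by blast
  have l3: "lim3 d A \<alpha> \<beta> s p W r \<tau>"
    unfolding lim3_def using l2 lim2.lim2_swap[OF l2] by blast
  interpret L: lim3 d A \<alpha> \<beta> s p W r \<tau> by (rule l3)
  show ?thesis using L.sig_mok L.Cost_sig by blast
qed

end

lemma dsize_fin_supp:
  assumes "finite {x. f x \<noteq> 0}" shows "dsize f < \<infinity>"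
proof -
  have "dsize f = (\<Sum>x\<in>{x. f x \<noteq> 0}. of_nat (f x))"
    unfolding dsize_def by (rule nn_integral_count_space'[OF assms]) auto
  thus ?thesis using assms by (simp add: of_nat_less_top)
qed

lemma Dp_far:
  assumes em: "emetric d" and p: "1 \<le> p" and a: "\<alpha> \<in> Dp d A p" and \<delta>: "(\<delta>::real) > 0"
  shows "finite {u. \<alpha> u \<noteq> 0 \<and> ennreal \<delta> \<le> setdist d u A}"
proof (cases "p = \<infinity>")
  case True
  hence "dsize (upper_part d A (ennreal \<delta>) \<alpha>) < \<infinity>" using a \<delta> by (simp add: Dp_def)
  hence "finite {x. upper_part d A (ennreal \<delta>) \<alpha> x \<noteq> 0}" by (rule dsize_finite)
  moreover have "{x. upper_part d A (ennreal \<delta>) \<alpha> x \<noteq> 0} = {u. \<alpha> u \<noteq> 0 \<and> ennreal \<delta> \<le> setdist d u A}"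
    by (auto simp: upper_part_def restr_def thick_def not_less)
  ultimately show ?thesis by simp
next
  case pf: False
  have up: "dsize (upper_part d A \<infinity> \<alpha>) < \<infinity>" and lo: "Wp d A p (lower_part d A \<infinity> \<alpha>) (\<lambda>_. 0) < \<infinity>"
    and ad: "\<alpha> \<in> dgm A"
    using a pf by (auto simp: Dp_def)
  have f1: "finite {u. \<alpha> u \<noteq> 0 \<and> \<not> setdist d u A < \<infinity>}"
  proof -
    have "finite {x. upper_part d A \<infinity> \<alpha> x \<noteq> 0}" by (rule dsize_finite[OF up])
    moreover have "{x. upper_part d A \<infinity> \<alpha> x \<noteq> 0} = {u. \<alpha> u \<noteq> 0 \<and> \<not> setdist d u A < \<infinity>}"
      by (auto simp: upper_part_def restr_def thick_def)
    ultimately show ?thesis by simp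
  qed
  define lo\<alpha> where "lo\<alpha> = lower_part d A \<infinity> \<alpha>"
  obtain \<sigma> where sm: "is_matching A lo\<alpha> (\<lambda>_. 0) \<sigma>" and sc: "Cost d p \<sigma> < \<infinity>"
    using lo unfolding Wp_def lo\<alpha>_def by (auto simp: INF_less_iff)
  have m: "mok A lo\<alpha> (\<lambda>_. 0) \<sigma>" by (rule matching_mok[OF sm])
  define r where "r = enn2real p"
  have rp: "r > 0" using p pf unfolding r_def by (cases p) (auto simp flip: ennreal_1 simp: ennreal_le_iff)
  define I where "I = (\<integral>\<^sup>+ q. of_nat (\<sigma> q) * enn_powr (d (fst q) (snd q)) r \<partial>count_space UNIV)"
  have Ifin: "I < \<infinity>"
  proof (rule ccontr)
    assume "\<not> I < \<infinity>"
    hence "I = \<infinity>" by (simp add: less_top[symmetric])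
    hence "Cost d p \<sigma> = \<infinity>" using pf by (simp add: Cost_def I_def r_def enn_powr_def)
    thus False using sc by simp
  qed
  define S where "S = {u. lo\<alpha> u \<noteq> 0 \<and> ennreal \<delta> \<le> setdist d u A}"
  have pt: "\<exists>v. \<sigma> (u, v) \<noteq> 0 \<and> v \<in> A" if u: "u \<in> S" for u
  proof -
    have uA: "u \<notin> A" using u by (auto simp: S_def lo\<alpha>_def lower_part_def restr_def)
    have "lo\<alpha> u \<noteq> 0" using u by (simp add: S_def)
    have "{v. \<sigma> (u, v) \<noteq> 0} \<noteq> {}"
    proof
      assume h: "{v. \<sigma> (u, v) \<noteq> 0} = {}"
      have "lo\<alpha> u = 0" using mok_row[OF m uA] unfolding h by simp
      thus False using \<open>lo\<alpha> u \<noteq> 0\<close> by simp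
    qed
    then obtain v where v: "\<sigma> (u, v) \<noteq> 0" by auto
    have "v \<in> A" using mok_le_col[OF m, of v u] v by (cases "v \<in> A") auto
    thus ?thesis using v by blast
  qed
  define vv where "vv u = (SOME v. \<sigma> (u, v) \<noteq> 0 \<and> v \<in> A)" for u
  have vv: "\<sigma> (u, vv u) \<noteq> 0 \<and> vv u \<in> A" if "u \<in> S" for u
    unfolding vv_def using someI_ex[OF pt[OF that]] .
  have fS: "finite S"
  proof (rule card_bound_finite[where c="enn_powr (ennreal \<delta>) r" and I=I])
    fix F assume F: "finite F" "F \<subseteq> S"
    have "of_nat (card F) * enn_powr (ennreal \<delta>) r = (\<Sum>u\<in>F. enn_powr (ennreal \<delta>) r)" by simp
    also have "\<dots> \<le> (\<Sum>u\<in>F. of_nat (\<sigma> (u, vv u)) * enn_powr (d u (vv u)) r)"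
    proof (rule sum_mono)
      fix u assume u: "u \<in> F"
      hence uS: "u \<in> S" using F by auto
      have "ennreal \<delta> \<le> setdist d u A" using uS by (simp add: S_def)
      also have "\<dots> \<le> d u (vv u)" using vv[OF uS] by (intro setdist_le) simp
      finally have "enn_powr (ennreal \<delta>) r \<le> enn_powr (d u (vv u)) r" using rp by (intro enn_powr_mono) auto
      also have "\<dots> \<le> of_nat (\<sigma> (u, vv u)) * enn_powr (d u (vv u)) r"
        using vv[OF uS] by (cases "\<sigma> (u, vv u)") (auto simp: distrib_right)
      finally show "enn_powr (ennreal \<delta>) r \<le> of_nat (\<sigma> (u, vv u)) * enn_powr (d u (vv u)) r" .
    qed
    also have "\<dots> = (\<Sum>q\<in>(\<lambda>u. (u, vv u)) ` F. of_nat (\<sigma> q) * enn_powr (d (fst q) (snd q)) r)"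
      by (subst sum.reindex) (auto simp: inj_on_def)
    also have "\<dots> \<le> I" unfolding I_def by (rule finite_sum_le_nn) (use F in auto)
    finally show "of_nat (card F) * enn_powr (ennreal \<delta>) r \<le> I" .
  next
    show "0 < enn_powr (ennreal \<delta>) r" using \<delta> rp by (intro enn_powr_pos) auto
  qed (rule Ifin)
  have "{u. \<alpha> u \<noteq> 0 \<and> ennreal \<delta> \<le> setdist d u A} \<subseteq> {u. \<alpha> u \<noteq> 0 \<and> \<not> setdist d u A < \<infinity>} \<union> S"
  proof
    fix u assume u: "u \<in> {u. \<alpha> u \<noteq> 0 \<and> ennreal \<delta> \<le> setdist d u A}"
    show "u \<in> {u. \<alpha> u \<noteq> 0 \<and> \<not> setdist d u A < \<infinity>} \<union> S"
    proof (cases "setdist d u A < \<infinity>")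
      case True
      have "u \<notin> A"
      proof
        assume "u \<in> A" hence "\<alpha> u = 0" using ad by (simp add: dgm_def)
        thus False using u by simp
      qed
      hence "lo\<alpha> u = \<alpha> u" unfolding lo\<alpha>_def lower_part_def restr_def thick_def using True by simp
      thus ?thesis using u by (simp add: S_def)
    next
      case False thus ?thesis using u by simp
    qed
  qed
  moreover have "finite ({u. \<alpha> u \<noteq> 0 \<and> \<not> setdist d u A < \<infinity>} \<union> S)" using f1 fS by (rule finite_UnI)
  ultimately show ?thesis by (rule finite_subset)
qed


lemma Cost_single:
  assumes p: "1 \<le> p"
  shows "Cost d p (\<lambda>q. if q = q0 then 1 else 0) \<le> d (fst q0) (snd q0)"
proof (cases "p = \<infinity>")
  case True
  have "{q. (if q = q0 then 1 else 0::nat) \<noteq> 0} = {q0}" by auto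
  thus ?thesis using True unfolding Cost_def by simp
next
  case False
  have "(\<integral>\<^sup>+ q. of_nat (if q = q0 then 1 else 0::nat) * enn_powr (d (fst q) (snd q)) (enn2real p) \<partial>count_space UNIV)
     = (\<Sum>q\<in>{q0}. of_nat (if q = q0 then 1 else 0::nat) * enn_powr (d (fst q) (snd q)) (enn2real p))"
    by (rule nn_integral_count_space') auto
  thus ?thesis using Cost_le_iff[OF p False, of d "\<lambda>q. if q = q0 then 1 else 0" "d (fst q0) (snd q0)"] by simp
qed

lemma Cost_zero:
  assumes p: "1 \<le> p" shows "Cost d p (\<lambda>q. 0) = 0"
proof (cases "p = \<infinity>")
  case True thus ?thesis unfolding Cost_def by (simp add: bot_ennreal)
next
  case False thus ?thesis unfolding Cost_def by (simp add: enn_powr_def)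
qed

lemma dgm_AA:
  assumes "mok A \<alpha> \<beta> \<sigma>" shows "\<sigma> \<in> dgm (A \<times> A)"
  unfolding dgm_def using mok_cnt[OF assms] mok_AA[OF assms] by auto

theorem theorem4p8:
  fixes d :: "'a \<Rightarrow> 'a \<Rightarrow> ennreal" and A :: "'a set" and p :: ennreal
  assumes "emetric d" and "eclosed d A" and "1 \<le> p"
  shows "(\<forall>\<alpha>\<in>Dp d A p. \<forall>\<beta>\<in>Dp d A p. Wp d A p \<alpha> \<beta> < \<infinity> \<longrightarrow>
            (\<exists>\<sigma>\<in>dgm (A \<times> A). is_matching A \<alpha> \<beta> \<sigma> \<and> Cost d p \<sigma> = Wp d A p \<alpha> \<beta>))
         \<longleftrightarrow> dist_minimizing d A"
proof
  note em = assms(1) and p = assms(3)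
  assume H: "\<forall>\<alpha>\<in>Dp d A p. \<forall>\<beta>\<in>Dp d A p. Wp d A p \<alpha> \<beta> < \<infinity> \<longrightarrow>
            (\<exists>\<sigma>\<in>dgm (A \<times> A). is_matching A \<alpha> \<beta> \<sigma> \<and> Cost d p \<sigma> = Wp d A p \<alpha> \<beta>)"
  show "dist_minimizing d A" unfolding dist_minimizing_def
  proof (intro allI impI)
    fix x assume fin: "setdist d x A < \<infinity>"
    show "\<exists>a\<in>A. setdist d x A = d x a"
    proof (cases "x \<in> A")
      case True
      have "d x x = 0" using em unfolding emetric_def by blast
      moreover have "setdist d x A \<le> d x x" by (rule setdist_le[OF True])
      ultimately show ?thesis using True by (intro bexI[of _ x]) auto
    next
      case xA: False
      define \<alpha> where "\<alpha> = (\<lambda>u. if u = x then 1 else 0::nat)"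
      define \<beta>0 where "\<beta>0 = (\<lambda>u::'a. 0::nat)"
      have ad: "\<alpha> \<in> dgm A" using xA unfolding dgm_def \<alpha>_def
        by (auto intro: countable_subset[of _ "{x}"])
      have bd: "\<beta>0 \<in> dgm A" unfolding dgm_def \<beta>0_def by simp
      have single: "Wp d A p \<alpha> \<beta>0 \<le> d x a" if aA: "a \<in> A" for a
      proof -
        have "mok A \<alpha> \<beta>0 (\<lambda>q. if q = (x, a) then 1 else 0)"
          unfolding mok_def
        proof (intro conjI allI impI)
          fix u v assume "u \<in> A" "v \<in> A" thus "(if (u, v) = (x, a) then 1 else 0::nat) = 0" using xA by auto
        next
          fix u assume "u \<notin> A"
          show "finite {v. (if (u, v) = (x, a) then 1 else 0::nat) \<noteq> 0}" by (cases "u = x") auto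
          show "(\<Sum>v\<in>{v. (if (u, v) = (x, a) then 1 else 0::nat) \<noteq> 0}. if (u, v) = (x, a) then 1 else 0) = \<alpha> u"
            by (cases "u = x") (auto simp: \<alpha>_def)
        next
          fix v assume vA: "v \<notin> A"
          have "{u. (if (u, v) = (x, a) then 1 else 0::nat) \<noteq> 0} = {}" using vA aA by auto
          thus "finite {u. (if (u, v) = (x, a) then 1 else 0::nat) \<noteq> 0}" by simp
          show "(\<Sum>u\<in>{u. (if (u, v) = (x, a) then 1 else 0::nat) \<noteq> 0}. if (u, v) = (x, a) then 1 else 0) = \<beta>0 v"
            using \<open>{u. (if (u, v) = (x, a) then 1 else 0::nat) \<noteq> 0} = {}\<close> by (simp add: \<beta>0_def)
        next
          show "countable {q. (if q = (x, a) then 1 else 0::nat) \<noteq> 0}"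
            by (rule countable_subset[of _ "{(x, a)}"]) auto
        qed
        hence "is_matching A \<alpha> \<beta>0 (\<lambda>q. if q = (x, a) then 1 else 0)" by (rule mok_matching[OF ad bd])
        hence "Wp d A p \<alpha> \<beta>0 \<le> Cost d p (\<lambda>q. if q = (x, a) then 1 else 0)"
          unfolding Wp_def by (intro INF_lower) simp
        also have "\<dots> \<le> d x a" using Cost_single[OF p, of d "(x, a)"] by simp
        finally show ?thesis .
      qed
      have WleS: "Wp d A p \<alpha> \<beta>0 \<le> setdist d x A"
        unfolding setdist_def using single by (intro INF_greatest) auto
      have Wfin: "Wp d A p \<alpha> \<beta>0 < \<infinity>" using WleS fin by (rule le_less_trans)
      have zero_match: "Wp d A p \<beta>0 \<beta>0 < \<infinity>"
      proof -
        have "mok A \<beta>0 \<beta>0 (\<lambda>q. 0)" unfolding mok_def \<beta>0_def by simp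
        hence "is_matching A \<beta>0 \<beta>0 (\<lambda>q. 0)" by (rule mok_matching[OF bd bd])
        hence "Wp d A p \<beta>0 \<beta>0 \<le> Cost d p (\<lambda>q. 0)" unfolding Wp_def by (intro INF_lower) simp
        thus ?thesis using Cost_zero[OF p, of d] by simp
      qed
      have supx: "finite {u. restr S \<alpha> u \<noteq> 0}" for S
        by (rule finite_subset[of _ "{x}"]) (auto simp: restr_def \<alpha>_def)
      have sup0: "finite {u. restr S \<beta>0 u \<noteq> 0}" for S
        by (simp add: restr_def \<beta>0_def)
      have low\<alpha>: "lower_part d A \<infinity> \<alpha> = \<alpha>"
        using xA fin by (auto simp: lower_part_def restr_def thick_def \<alpha>_def)
      have low0: "lower_part d A \<infinity> \<beta>0 = \<beta>0"
        by (auto simp: lower_part_def restr_def \<beta>0_def)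
      have aDp: "\<alpha> \<in> Dp d A p"
        unfolding Dp_def upper_part_def using ad dsize_fin_supp[OF supx] low\<alpha> Wfin by (auto simp: \<beta>0_def)
      have bDp: "\<beta>0 \<in> Dp d A p"
        unfolding Dp_def upper_part_def using bd dsize_fin_supp[OF sup0] low0 zero_match by (auto simp: \<beta>0_def)
      obtain \<sigma> where sd: "\<sigma> \<in> dgm (A \<times> A)" and sm: "is_matching A \<alpha> \<beta>0 \<sigma>" and sc: "Cost d p \<sigma> = Wp d A p \<alpha> \<beta>0"
        using H aDp bDp Wfin by blast
      have m: "mok A \<alpha> \<beta>0 \<sigma>" by (rule matching_mok[OF sm])
      have "{v. \<sigma> (x, v) \<noteq> 0} \<noteq> {}"
      proof
        assume h: "{v. \<sigma> (x, v) \<noteq> 0} = {}"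
        have "\<alpha> x = 0" using mok_row[OF m xA] unfolding h by simp
        thus False by (simp add: \<alpha>_def)
      qed
      then obtain v where v: "\<sigma> (x, v) \<noteq> 0" by auto
      have vA: "v \<in> A" using mok_le_col[OF m, of v x] v by (cases "v \<in> A") (auto simp: \<beta>0_def)
      have "d x v \<le> Cost d p \<sigma>" using Cost_ge_point[OF p, of \<sigma> "(x, v)"] v by simp
      hence "d x v \<le> setdist d x A" using sc WleS by simp
      moreover have "setdist d x A \<le> d x v" by (rule setdist_le[OF vA])
      ultimately show ?thesis using vA by (intro bexI[of _ v]) auto
    qed
  qed
next
  note em = assms(1) and p = assms(3)
  assume dm: "dist_minimizing d A"
  show "\<forall>\<alpha>\<in>Dp d A p. \<forall>\<beta>\<in>Dp d A p. Wp d A p \<alpha> \<beta> < \<infinity> \<longrightarrow>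
            (\<exists>\<sigma>\<in>dgm (A \<times> A). is_matching A \<alpha> \<beta> \<sigma> \<and> Cost d p \<sigma> = Wp d A p \<alpha> \<beta>)"
  proof (intro ballI impI)
    fix \<alpha> \<beta> assume aDp: "\<alpha> \<in> Dp d A p" and bDp: "\<beta> \<in> Dp d A p" and Wfin: "Wp d A p \<alpha> \<beta> < \<infinity>"
    define W where "W = Wp d A p \<alpha> \<beta>"
    have ad: "\<alpha> \<in> dgm A" and bd: "\<beta> \<in> dgm A" using aDp bDp by (auto simp: Dp_def split: if_splits)
    have "\<exists>\<sigma>. is_matching A \<alpha> \<beta> \<sigma> \<and> Cost d p \<sigma> \<le> W + ennreal (1 / Suc n)" for n
    proof -
      have "W < W + ennreal (1 / Suc n)" using Wfin unfolding W_def
        by (cases "Wp d A p \<alpha> \<beta>") (auto simp: ennreal_plus[symmetric] ennreal_less_iff simp del: ennreal_plus)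
      then obtain \<sigma> where "is_matching A \<alpha> \<beta> \<sigma>" "Cost d p \<sigma> < W + ennreal (1 / Suc n)"
        unfolding W_def Wp_def by (auto simp: INF_less_iff)
      thus ?thesis by (auto intro: less_imp_le)
    qed
    then obtain s where s: "\<And>n. is_matching A \<alpha> \<beta> (s n) \<and> Cost d p (s n) \<le> W + ennreal (1 / Suc n)"
      by metis
    have ms: "\<And>n. mok A \<alpha> \<beta> (s n)" using s matching_mok by blast
    have ls: "lim_setup d A \<alpha> \<beta> s p W"
      unfolding lim_setup_def
      using em dm ad bd Dp_far[OF em p aDp] Dp_far[OF em p bDp] ms s p Wfin
      by (auto simp: W_def)
    obtain \<sigma> where sm: "mok A \<alpha> \<beta> \<sigma>" and sc: "Cost d p \<sigma> \<le> W"
      using lim_setup.exists_good[OF ls] by blast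
    have im: "is_matching A \<alpha> \<beta> \<sigma>" by (rule mok_matching[OF ad bd sm])
    have "W \<le> Cost d p \<sigma>" unfolding W_def Wp_def using im by (intro INF_lower) simp
    hence "Cost d p \<sigma> = W" using sc by simp
    thus "\<exists>\<sigma>\<in>dgm (A \<times> A). is_matching A \<alpha> \<beta> \<sigma> \<and> Cost d p \<sigma> = Wp d A p \<alpha> \<beta>"
      using im dgm_AA[OF sm] by (auto simp: W_def)
  qed
qed


end
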